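(* Let $\mathcal{F}^\mathcal{P}$ be the family of product chains induced by $\mathcal{F}$ and $\mathcal{P}$, and assume all chains in $\mathcal{F}$ are reversible. Then $\mathcal{F}^\mathcal{P}$ has an $L^2$-cutoff if and only if $\tilde\tau_n(c)\rho_{n,\tilde j_n(c)}\to\infty$ for all $c>0$. Further, if $\mathcal{F}^\mathcal{P}$ has an $L^2$-cutoff, then $\tilde\tau_n(c)$ is an $L^2$-cutoff time for every $c>0$ and \[|T_{n,2}(\mu_n,\epsilon)-\tilde\tau_n(c)|=O\big(\sqrt{\tilde\tau_n(c)/\rho_{n,\tilde j_n(c)}}\big)\quad\forall\epsilon,c>0.\]
   Context: $\mathcal{F}=\{(\mu_{n,i},\mathcal{S}_{n,i},L_{n,i},\pi_{n,i}):1\le i\le\ell_n,n\ge1\}$ is a triangular array of irreducible continuous-time finite Markov chains and $\mathcal{P}=\{p_{n,i}>0\}$ with $\sum_ip_{n,i}\le1$. The product chain $(\mu_n,\mathcal{S}_n,L_n,\pi_n)$ has $\mathcal{S}_n=\prod_i\mathcal{S}_{n,i}$, $\mu_n=\prod_i\mu_{n,i}$, $\pi_n=\prod_i\pi_{n,i}$, $L_n=\sum_ip_{n,i}I_{n,1}\otimes\cdots\otimes L_{n,i}\otimes\cdots\otimes I_{n,\ell_n}$. Let $0=\lambda_{n,i,0},\lambda_{n,i,1},\dots,\lambda_{n,i,|\mathcal{S}_{n,i}|-1}$ be the eigenvalues of $-L_{n,i}$ with $L^2(\pi_{n,i})$-orthonormal right eigenvectors $\phi_{n,i,0}=\mathbf1,\phi_{n,i,1},\dots$.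 Enumerate the multiset $\{p_{n,i}\lambda_{n,i,j}:1\le j<|\mathcal{S}_{n,i}|,1\le i\le\ell_n\}$ as $\rho_{n,1}\le\rho_{n,2}\le\cdots$ and let $\psi_{n,l}$ be the corresponding value $\mu_{n,i}(\phi_{n,i,j})=\sum_x\mu_{n,i}(x)\phi_{n,i,j}(x)$. For $c>0$: $\tilde j_n(c)=\min\{j\ge1:\sum_{l=1}^j\psi_{n,l}^2>c\}$ and $\tilde\tau_n(c)=\max_{j\ge\tilde j_n(c)}\frac{\log(1+\sum_{l=1}^j|\psi_{n,l}|^2)}{2\rho_{n,j}}$. $d_{n,2}(\mu_n,t)=\|\mu_ne^{tL_n}/\pi_n-1\|_{L^2(\pi_n)}$, $T_{n,2}(\mu_n,\epsilon)=\min\{t\ge0:d_{n,2}(\mu_n,t)\le\epsilon\}$. $L^2$-cutoff: there is $t_n>0$ with $d_{n,2}(\mu_n,(1+a)t_n)\to0$ and $d_{n,2}(\mu_n,(1-a)t_n)\to\infty$ for all $a\in(0,1)$ ($t_n$ a cutoff time). $a_n=O(b_n)$ means $\sup_na_n/b_n<\infty$. *)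

theory Defs
  imports "HOL-Analysis.Analysis"
begin

definition is_generator :: "'a set \<Rightarrow> ('a \<Rightarrow> 'a \<Rightarrow> real) \<Rightarrow> bool" where
  "is_generator S L \<longleftrightarrow>
     (\<forall>x\<in>S. \<forall>y\<in>S. x \<noteq> y \<longrightarrow> L x y \<ge> 0) \<and> (\<forall>x\<in>S. (\<Sum>y\<in>S. L x y) = 0)"

definition irreducible_gen :: "'a set \<Rightarrow> ('a \<Rightarrow> 'a \<Rightarrow> real) \<Rightarrow> bool" where
  "irreducible_gen S L \<longleftrightarrow>
     (\<forall>x\<in>S. \<forall>y\<in>S. (x, y) \<in> {(u, v). u \<in> S \<and> v \<in> S \<and> u \<noteq> v \<and> L u v > 0}\<^sup>*)"

definition is_distribution :: "'a set \<Rightarrow> ('a \<Rightarrow> real) \<Rightarrow> bool" where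
  "is_distribution S \<mu> \<longleftrightarrow> (\<forall>x\<in>S. \<mu> x \<ge> 0) \<and> sum \<mu> S = 1"

definition stationary :: "'a set \<Rightarrow> ('a \<Rightarrow> 'a \<Rightarrow> real) \<Rightarrow> ('a \<Rightarrow> real) \<Rightarrow> bool" where
  "stationary S L \<pi> \<longleftrightarrow> (\<forall>x\<in>S. \<pi> x > 0) \<and> sum \<pi> S = 1 \<and>
     (\<forall>y\<in>S. (\<Sum>x\<in>S. \<pi> x * L x y) = 0)"

definition reversible :: "'a set \<Rightarrow> ('a \<Rightarrow> 'a \<Rightarrow> real) \<Rightarrow> ('a \<Rightarrow> real) \<Rightarrow> bool" where
  "reversible S L \<pi> \<longleftrightarrow> (\<forall>x\<in>S. \<forall>y\<in>S. \<pi> x * L x y = \<pi> y * L y x)"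

definition finite_irred_chain :: "'a set \<Rightarrow> ('a \<Rightarrow> 'a \<Rightarrow> real) \<Rightarrow> ('a \<Rightarrow> real) \<Rightarrow> bool" where
  "finite_irred_chain S L \<pi> \<longleftrightarrow> finite S \<and> S \<noteq> {} \<and> is_generator S L \<and>
     irreducible_gen S L \<and> stationary S L \<pi>"

fun kpow :: "'a set \<Rightarrow> ('a \<Rightarrow> 'a \<Rightarrow> real) \<Rightarrow> nat \<Rightarrow> 'a \<Rightarrow> 'a \<Rightarrow> real" where
  "kpow S L 0 x y = (if x = y then 1 else 0)"
| "kpow S L (Suc k) x y = (\<Sum>z\<in>S. L x z * kpow S L k z y)"

definition heat :: "'a set \<Rightarrow> ('a \<Rightarrow> 'a \<Rightarrow> real) \<Rightarrow> real \<Rightarrow> 'a \<Rightarrow> 'a \<Rightarrow> real" where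
  "heat S L t x y = (\<Sum>k. t ^ k / fact k * kpow S L k x y)"

definition evolve :: "'a set \<Rightarrow> ('a \<Rightarrow> 'a \<Rightarrow> real) \<Rightarrow> ('a \<Rightarrow> real) \<Rightarrow> real \<Rightarrow> 'a \<Rightarrow> real" where
  "evolve S L \<mu> t y = (\<Sum>x\<in>S. \<mu> x * heat S L t x y)"

definition d2 :: "'a set \<Rightarrow> ('a \<Rightarrow> 'a \<Rightarrow> real) \<Rightarrow> ('a \<Rightarrow> real) \<Rightarrow> ('a \<Rightarrow> real) \<Rightarrow> real \<Rightarrow> real" where
  "d2 S L \<pi> \<mu> t = sqrt (\<Sum>y\<in>S. \<pi> y * (evolve S L \<mu> t y / \<pi> y - 1)\<^sup>2)"

definition T2 :: "'a set \<Rightarrow> ('a \<Rightarrow> 'a \<Rightarrow> real) \<Rightarrow> ('a \<Rightarrow> real) \<Rightarrow> ('a \<Rightarrow> real) \<Rightarrow> real \<Rightarrow> real" where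
  "T2 S L \<pi> \<mu> \<epsilon> = Inf {t. t \<ge> 0 \<and> d2 S L \<pi> \<mu> t \<le> \<epsilon>}"

text \<open>Components are indexed by i < l (0-based). States of the product are functions
  x with x i in S i for i < l (and undefined elsewhere).\<close>

definition prod_space :: "nat \<Rightarrow> (nat \<Rightarrow> 'a set) \<Rightarrow> (nat \<Rightarrow> 'a) set" where
  "prod_space l S = PiE {..<l} S"

definition prod_measure :: "nat \<Rightarrow> (nat \<Rightarrow> 'a \<Rightarrow> real) \<Rightarrow> (nat \<Rightarrow> 'a) \<Rightarrow> real" where
  "prod_measure l \<mu> x = (\<Prod>i<l. \<mu> i (x i))"

text \<open>L = sum_i p_i I (x) ... (x) L_i (x) ... (x) I\<close>
definition prod_gen :: "nat \<Rightarrow> (nat \<Rightarrow> real) \<Rightarrow> (nat \<Rightarrow> 'a \<Rightarrow> 'a \<Rightarrow> real)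
    \<Rightarrow> (nat \<Rightarrow> 'a) \<Rightarrow> (nat \<Rightarrow> 'a) \<Rightarrow> real" where
  "prod_gen l p L x y =
     (\<Sum>i<l. p i * (L i (x i) (y i) * (\<Prod>j\<in>{..<l} - {i}. (if x j = y j then 1 else 0))))"

definition prod_d2 :: "nat \<Rightarrow> (nat \<Rightarrow> 'a set) \<Rightarrow> (nat \<Rightarrow> real) \<Rightarrow> (nat \<Rightarrow> 'a \<Rightarrow> 'a \<Rightarrow> real)
    \<Rightarrow> (nat \<Rightarrow> 'a \<Rightarrow> real) \<Rightarrow> (nat \<Rightarrow> 'a \<Rightarrow> real) \<Rightarrow> real \<Rightarrow> real" where
  "prod_d2 l S p L \<pi> \<mu> t =
     d2 (prod_space l S) (prod_gen l p L) (prod_measure l \<pi>) (prod_measure l \<mu>) t"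

definition prod_T2 :: "nat \<Rightarrow> (nat \<Rightarrow> 'a set) \<Rightarrow> (nat \<Rightarrow> real) \<Rightarrow> (nat \<Rightarrow> 'a \<Rightarrow> 'a \<Rightarrow> real)
    \<Rightarrow> (nat \<Rightarrow> 'a \<Rightarrow> real) \<Rightarrow> (nat \<Rightarrow> 'a \<Rightarrow> real) \<Rightarrow> real \<Rightarrow> real" where
  "prod_T2 l S p L \<pi> \<mu> \<epsilon> =
     T2 (prod_space l S) (prod_gen l p L) (prod_measure l \<pi>) (prod_measure l \<mu>) \<epsilon>"

definition orthonormal_eigendata :: "'a set \<Rightarrow> ('a \<Rightarrow> 'a \<Rightarrow> real) \<Rightarrow> ('a \<Rightarrow> real)
    \<Rightarrow> (nat \<Rightarrow> real) \<Rightarrow> (nat \<Rightarrow> 'a \<Rightarrow> real) \<Rightarrow> bool" where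
  "orthonormal_eigendata S L \<pi> lam phi \<longleftrightarrow>
     lam 0 = 0 \<and> (\<forall>x\<in>S. phi 0 x = 1) \<and>
     (\<forall>j<card S. \<forall>x\<in>S. (\<Sum>y\<in>S. L x y * phi j y) = - lam j * phi j x) \<and>
     (\<forall>j<card S. \<forall>k<card S. (\<Sum>x\<in>S. \<pi> x * phi j x * phi k x) = (if j = k then 1 else 0))"

definition num_eig :: "nat \<Rightarrow> (nat \<Rightarrow> 'a set) \<Rightarrow> nat" where
  "num_eig l S = (\<Sum>i<l. card (S i) - 1)"

definition rho :: "(nat \<Rightarrow> real) \<Rightarrow> (nat \<Rightarrow> nat \<Rightarrow> real) \<Rightarrow> (nat \<Rightarrow> nat \<times> nat) \<Rightarrow> nat \<Rightarrow> real" where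
  "rho p lam sig l = p (fst (sig l)) * lam (fst (sig l)) (snd (sig l))"

definition psi :: "(nat \<Rightarrow> 'a set) \<Rightarrow> (nat \<Rightarrow> 'a \<Rightarrow> real) \<Rightarrow> (nat \<Rightarrow> nat \<Rightarrow> 'a \<Rightarrow> real)
    \<Rightarrow> (nat \<Rightarrow> nat \<times> nat) \<Rightarrow> nat \<Rightarrow> real" where
  "psi S \<mu> phi sig l = (\<Sum>x\<in>S (fst (sig l)). \<mu> (fst (sig l)) x * phi (fst (sig l)) (snd (sig l)) x)"

definition sorted_enum :: "nat \<Rightarrow> (nat \<Rightarrow> 'a set) \<Rightarrow> (nat \<Rightarrow> real) \<Rightarrow> (nat \<Rightarrow> nat \<Rightarrow> real)
    \<Rightarrow> (nat \<Rightarrow> nat \<times> nat) \<Rightarrow> bool" where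
  "sorted_enum l S p lam sig \<longleftrightarrow>
     bij_betw sig {1..num_eig l S} {(i, j). i < l \<and> 1 \<le> j \<and> j < card (S i)} \<and>
     (\<forall>a b. 1 \<le> a \<longrightarrow> a \<le> b \<longrightarrow> b \<le> num_eig l S \<longrightarrow> rho p lam sig a \<le> rho p lam sig b)"

definition jt_defined :: "nat \<Rightarrow> (nat \<Rightarrow> 'a set) \<Rightarrow> (nat \<Rightarrow> 'a \<Rightarrow> real)
    \<Rightarrow> (nat \<Rightarrow> nat \<Rightarrow> 'a \<Rightarrow> real) \<Rightarrow> (nat \<Rightarrow> nat \<times> nat) \<Rightarrow> real \<Rightarrow> bool" where
  "jt_defined l S \<mu> phi sig c \<longleftrightarrow>
     (\<exists>j. 1 \<le> j \<and> j \<le> num_eig l S \<and> (\<Sum>k=1..j. (psi S \<mu> phi sig k)\<^sup>2) > c)"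

definition jt :: "nat \<Rightarrow> (nat \<Rightarrow> 'a set) \<Rightarrow> (nat \<Rightarrow> 'a \<Rightarrow> real)
    \<Rightarrow> (nat \<Rightarrow> nat \<Rightarrow> 'a \<Rightarrow> real) \<Rightarrow> (nat \<Rightarrow> nat \<times> nat) \<Rightarrow> real \<Rightarrow> nat" where
  "jt l S \<mu> phi sig c =
     (LEAST j. 1 \<le> j \<and> j \<le> num_eig l S \<and> (\<Sum>k=1..j. (psi S \<mu> phi sig k)\<^sup>2) > c)"

definition taut :: "nat \<Rightarrow> (nat \<Rightarrow> 'a set) \<Rightarrow> (nat \<Rightarrow> real) \<Rightarrow> (nat \<Rightarrow> nat \<Rightarrow> real)
    \<Rightarrow> (nat \<Rightarrow> 'a \<Rightarrow> real) \<Rightarrow> (nat \<Rightarrow> nat \<Rightarrow> 'a \<Rightarrow> real) \<Rightarrow> (nat \<Rightarrow> nat \<times> nat) \<Rightarrow> real \<Rightarrow> real" where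
  "taut l S p lam \<mu> phi sig c =
     Max ((\<lambda>j. ln (1 + (\<Sum>k=1..j. \<bar>psi S \<mu> phi sig k\<bar>\<^sup>2)) / (2 * rho p lam sig j))
            ` {jt l S \<mu> phi sig c .. num_eig l S})"

definition L2_cutoff_time :: "(nat \<Rightarrow> real \<Rightarrow> real) \<Rightarrow> (nat \<Rightarrow> real) \<Rightarrow> bool" where
  "L2_cutoff_time d t \<longleftrightarrow> (\<forall>\<^sub>F n in sequentially. t n > 0) \<and>
     (\<forall>a. 0 < a \<and> a < 1 \<longrightarrow>
        ((\<lambda>n. d n ((1 + a) * t n)) \<longlonglongrightarrow> 0) \<and>
        filterlim (\<lambda>n. d n ((1 - a) * t n)) at_top sequentially)"

definition has_L2_cutoff :: "(nat \<Rightarrow> real \<Rightarrow> real) \<Rightarrow> bool" where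
  "has_L2_cutoff d \<longleftrightarrow> (\<exists>t. L2_cutoff_time d t)"

end

theory Submission
  imports Defs
begin


lemma sum_swap4:
  "(\<Sum>a\<in>A. \<Sum>b\<in>B. \<Sum>c\<in>C. \<Sum>d\<in>D. f a b c d) = (\<Sum>c\<in>C. \<Sum>d\<in>D. \<Sum>a\<in>A. \<Sum>b\<in>B. f a b c d)"
proof -
  have "(\<Sum>a\<in>A. \<Sum>b\<in>B. \<Sum>c\<in>C. \<Sum>d\<in>D. f a b c d) = (\<Sum>a\<in>A. \<Sum>c\<in>C. \<Sum>d\<in>D. \<Sum>b\<in>B. f a b c d)"
    by (rule sum.cong[OF refl], subst sum.swap, rule sum.cong[OF refl], rule sum.swap)
  also have "\<dots> = (\<Sum>c\<in>C. \<Sum>d\<in>D. \<Sum>a\<in>A. \<Sum>b\<in>B. f a b c d)"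
    by (subst sum.swap, rule sum.cong[OF refl], rule sum.swap)
  finally show ?thesis .
qed

lemma complete_onb:
  fixes X :: "'x set" and I :: "'j set" and Phi :: "'j \<Rightarrow> 'x \<Rightarrow> real" and pi :: "'x \<Rightarrow> real"
  assumes fX: "finite X" and fI: "finite I" and cI: "card I = card X" and pos: "\<forall>x\<in>X. pi x > 0"
    and orth: "\<forall>J\<in>I. \<forall>K\<in>I. (\<Sum>x\<in>X. pi x * Phi J x * Phi K x) = (if J = K then 1 else 0)"
    and x: "x \<in> X" and y: "y \<in> X"
  shows "(\<Sum>J\<in>I. Phi J x * Phi J y) * pi y = (if x = y then 1 else 0)"
proof -
  define K where "K x y = (\<Sum>J\<in>I. Phi J x * Phi J y)" for x y
  define dl where "dl x y = (if x = y then 1 / pi x else 0)" for x y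
  define D where "D x y = dl x y - K x y" for x y
  have dsum: "(\<Sum>y\<in>X. (if x = y then f y else 0)) = f x" if "x \<in> X" for x and f :: "'x \<Rightarrow> real"
    using that fX by simp
  have S1: "(\<Sum>x\<in>X. \<Sum>y\<in>X. pi x * pi y * (dl x y)\<^sup>2) = real (card X)"
  proof -
    have "(\<Sum>x\<in>X. \<Sum>y\<in>X. pi x * pi y * (dl x y)\<^sup>2) = (\<Sum>x\<in>X. \<Sum>y\<in>X. (if x = y then 1 else 0))"
    proof (intro sum.cong refl)
      fix x y assume "x \<in> X" "y \<in> X"
      thus "pi x * pi y * (dl x y)\<^sup>2 = (if x = y then 1 else 0)"
        using pos unfolding dl_def by (auto simp: power2_eq_square)
    qed
    also have "\<dots> = (\<Sum>x\<in>X. 1)" by (intro sum.cong refl dsum[of _ "\<lambda>_. 1", simplified])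
    finally show ?thesis by simp
  qed
  have S2: "(\<Sum>x\<in>X. \<Sum>y\<in>X. pi x * pi y * (dl x y * K x y)) = real (card I)"
  proof -
    have "(\<Sum>x\<in>X. \<Sum>y\<in>X. pi x * pi y * (dl x y * K x y)) = (\<Sum>x\<in>X. \<Sum>y\<in>X. (if x = y then pi y * K x y else 0))"
    proof (intro sum.cong refl)
      fix x y assume "x \<in> X" "y \<in> X"
      thus "pi x * pi y * (dl x y * K x y) = (if x = y then pi y * K x y else 0)"
        using pos unfolding dl_def by auto
    qed
    also have "\<dots> = (\<Sum>x\<in>X. pi x * K x x)" by (intro sum.cong refl) (simp add: fX)
    also have "\<dots> = (\<Sum>J\<in>I. \<Sum>x\<in>X. pi x * Phi J x * Phi J x)"
      unfolding K_def by (simp add: sum_distrib_left mult.assoc sum.swap[of _ X])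
    also have "\<dots> = (\<Sum>J\<in>I. 1)" using orth by (intro sum.cong) auto
    finally show ?thesis by simp
  qed
  have S3: "(\<Sum>x\<in>X. \<Sum>y\<in>X. pi x * pi y * (K x y)\<^sup>2) = real (card I)"
  proof -
    have "(\<Sum>x\<in>X. \<Sum>y\<in>X. pi x * pi y * (K x y)\<^sup>2)
        = (\<Sum>x\<in>X. \<Sum>y\<in>X. \<Sum>J\<in>I. \<Sum>J'\<in>I. (pi x * Phi J x * Phi J' x) * (pi y * Phi J y * Phi J' y))"
      unfolding K_def power2_eq_square sum_distrib_left sum_distrib_right
      by (intro sum.cong refl) (simp add: algebra_simps)
    also have "\<dots> = (\<Sum>J\<in>I. \<Sum>J'\<in>I. \<Sum>x\<in>X. \<Sum>y\<in>X. pi x * Phi J x * Phi J' x * (pi y * Phi J y * Phi J' y))"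
      by (rule sum_swap4)
    also have "\<dots> = (\<Sum>J\<in>I. \<Sum>J'\<in>I. (\<Sum>x\<in>X. pi x * Phi J x * Phi J' x) * (\<Sum>y\<in>X. pi y * Phi J y * Phi J' y))"
      by (simp only: sum_product)
    also have "\<dots> = (\<Sum>J\<in>I. \<Sum>J'\<in>I. (if J = J' then 1 else 0))"
      using orth by (intro sum.cong refl) auto
    also have "\<dots> = (\<Sum>J\<in>I. 1)" by (simp add: fI)
    finally show ?thesis by simp
  qed
  have tot: "(\<Sum>x\<in>X. \<Sum>y\<in>X. pi x * pi y * (D x y)\<^sup>2) = 0"
  proof -
    have "(\<Sum>x\<in>X. \<Sum>y\<in>X. pi x * pi y * (D x y)\<^sup>2)
       = (\<Sum>x\<in>X. \<Sum>y\<in>X. pi x * pi y * (dl x y)\<^sup>2 - 2 * (pi x * pi y * (dl x y * K x y)) + pi x * pi y * (K x y)\<^sup>2)"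
      unfolding D_def by (intro sum.cong refl) (simp add: power2_eq_square algebra_simps)
    also have "\<dots> = (\<Sum>x\<in>X. \<Sum>y\<in>X. pi x * pi y * (dl x y)\<^sup>2) - 2 * (\<Sum>x\<in>X. \<Sum>y\<in>X. pi x * pi y * (dl x y * K x y))
        + (\<Sum>x\<in>X. \<Sum>y\<in>X. pi x * pi y * (K x y)\<^sup>2)"
      by (simp only: sum.distrib sum_subtractf sum_distrib_left)
    also have "\<dots> = real (card X) - 2 * real (card I) + real (card I)"
      by (simp only: S1 S2 S3)
    finally show ?thesis using cI by simp
  qed
  have nn: "\<And>x y. x \<in> X \<Longrightarrow> y \<in> X \<Longrightarrow> pi x * pi y * (D x y)\<^sup>2 \<ge> 0"
    using pos by (simp add: less_imp_le)
  have "(\<Sum>y\<in>X. pi x * pi y * (D x y)\<^sup>2) = 0"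
    using tot x fX nn by (subst (asm) sum_nonneg_eq_0_iff) (auto intro: sum_nonneg)
  hence "pi x * pi y * (D x y)\<^sup>2 = 0" using y fX nn x by (subst (asm) sum_nonneg_eq_0_iff) auto
  hence "D x y = 0" using pos x y by (metis less_irrefl mult_eq_0_iff power_eq_0_iff)
  hence "K x y = dl x y" unfolding D_def by simp
  thus ?thesis using pos x y unfolding K_def dl_def by auto
qed


lemma kpow_expand:
  fixes Phi :: "'j \<Rightarrow> 'x \<Rightarrow> real" and w :: "'x \<Rightarrow> real"
  assumes compl: "\<forall>x\<in>X. \<forall>y\<in>X. (\<Sum>J\<in>I. Phi J x * Phi J y) * w y = (if x = y then 1 else 0)"
    and eigen: "\<forall>J\<in>I. \<forall>x\<in>X. (\<Sum>y\<in>X. G x y * Phi J y) = - Lam J * Phi J x"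
    and x: "x \<in> X" and y: "y \<in> X"
  shows "kpow X G k x y = (\<Sum>J\<in>I. (- Lam J) ^ k * Phi J x * Phi J y * w y)"
  using x
proof (induction k arbitrary: x)
  case 0
  then show ?case using compl y by (simp add: sum_distrib_right)
next
  case (Suc k)
  have "kpow X G (Suc k) x y = (\<Sum>z\<in>X. G x z * (\<Sum>J\<in>I. (- Lam J) ^ k * Phi J z * Phi J y * w y))"
    using Suc by simp
  also have "\<dots> = (\<Sum>J\<in>I. (- Lam J) ^ k * Phi J y * w y * (\<Sum>z\<in>X. G x z * Phi J z))"
    by (simp add: sum_distrib_left sum_distrib_right sum.swap[of _ X] algebra_simps)
  also have "\<dots> = (\<Sum>J\<in>I. (- Lam J) ^ Suc k * Phi J x * Phi J y * w y)"
    using eigen Suc.prems by (intro sum.cong refl) (simp add: algebra_simps)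
  finally show ?case .
qed

lemma heat_expand:
  fixes Phi :: "'j \<Rightarrow> 'x \<Rightarrow> real" and w :: "'x \<Rightarrow> real"
  assumes compl: "\<forall>x\<in>X. \<forall>y\<in>X. (\<Sum>J\<in>I. Phi J x * Phi J y) * w y = (if x = y then 1 else 0)"
    and eigen: "\<forall>J\<in>I. \<forall>x\<in>X. (\<Sum>y\<in>X. G x y * Phi J y) = - Lam J * Phi J x"
    and x: "x \<in> X" and y: "y \<in> X"
  shows "heat X G t x y = (\<Sum>J\<in>I. exp (- t * Lam J) * (Phi J x * Phi J y * w y))"
proof -
  have e: "(\<lambda>k. t ^ k / fact k * ((- Lam J) ^ k * (Phi J x * Phi J y * w y))) sums (exp (- t * Lam J) * (Phi J x * Phi J y * w y))" for J
  proof -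
    have "(\<lambda>k. (- t * Lam J) ^ k /\<^sub>R fact k) sums exp (- t * Lam J)" by (rule exp_converges)
    hence "(\<lambda>k. (- t * Lam J) ^ k /\<^sub>R fact k * (Phi J x * Phi J y * w y)) sums (exp (- t * Lam J) * (Phi J x * Phi J y * w y))"
      by (rule sums_mult2)
    moreover have "(- t * Lam J) ^ k /\<^sub>R fact k * (Phi J x * Phi J y * w y) = t ^ k / fact k * ((- Lam J) ^ k * (Phi J x * Phi J y * w y))" for k
    proof -
      have "(- t * Lam J) ^ k = t ^ k * (- Lam J) ^ k" by (simp add: power_mult_distrib[symmetric])
      thus ?thesis by (simp add: divide_inverse algebra_simps)
    qed
    ultimately show ?thesis by simp
  qed
  have "(\<lambda>k. \<Sum>J\<in>I. t ^ k / fact k * ((- Lam J) ^ k * (Phi J x * Phi J y * w y))) sums (\<Sum>J\<in>I. exp (- t * Lam J) * (Phi J x * Phi J y * w y))"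
    by (rule sums_sum) (rule e)
  moreover have "(\<Sum>J\<in>I. t ^ k / fact k * ((- Lam J) ^ k * (Phi J x * Phi J y * w y))) = t ^ k / fact k * kpow X G k x y" for k
    using kpow_expand[OF compl eigen x y, of k] by (simp add: sum_distrib_left mult.assoc)
  ultimately show ?thesis unfolding heat_def by (simp add: sums_iff)
qed

lemma orth_sq_sum:
  fixes Phi :: "'j \<Rightarrow> 'x \<Rightarrow> real" and w :: "'x \<Rightarrow> real"
  assumes fX: "finite X" and fI: "finite I'" and sub: "I' \<subseteq> I"
    and orth: "\<forall>J\<in>I. \<forall>K\<in>I. (\<Sum>x\<in>X. w x * Phi J x * Phi K x) = (if J = K then 1 else 0)"
  shows "(\<Sum>y\<in>X. w y * (\<Sum>J\<in>I'. c J * Phi J y)\<^sup>2) = (\<Sum>J\<in>I'. (c J)\<^sup>2)"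
proof -
  have "(\<Sum>y\<in>X. w y * (\<Sum>J\<in>I'. c J * Phi J y)\<^sup>2) = (\<Sum>y\<in>X. \<Sum>J\<in>I'. \<Sum>K\<in>I'. c J * c K * (w y * Phi J y * Phi K y))"
  proof (intro sum.cong refl)
    fix y assume "y \<in> X"
    have "(\<Sum>J\<in>I'. c J * Phi J y)\<^sup>2 = (\<Sum>J\<in>I'. \<Sum>K\<in>I'. c J * Phi J y * (c K * Phi K y))"
      by (simp only: power2_eq_square sum_product)
    thus "w y * (\<Sum>J\<in>I'. c J * Phi J y)\<^sup>2 = (\<Sum>J\<in>I'. \<Sum>K\<in>I'. c J * c K * (w y * Phi J y * Phi K y))"
      by (simp add: sum_distrib_left mult_ac)
  qed
  also have "\<dots> = (\<Sum>J\<in>I'. \<Sum>K\<in>I'. c J * c K * (\<Sum>y\<in>X. w y * Phi J y * Phi K y))"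
    by (simp add: sum_distrib_left sum.swap[of _ X])
  also have "\<dots> = (\<Sum>J\<in>I'. \<Sum>K\<in>I'. if J = K then c J * c K else 0)"
  proof (intro sum.cong refl)
    fix J K assume "J \<in> I'" "K \<in> I'"
    hence "(\<Sum>y\<in>X. w y * Phi J y * Phi K y) = (if J = K then 1 else 0)" using orth sub by blast
    thus "c J * c K * (\<Sum>y\<in>X. w y * Phi J y * Phi K y) = (if J = K then c J * c K else 0)" by simp
  qed
  also have "\<dots> = (\<Sum>J\<in>I'. (c J)\<^sup>2)" using fI by (simp add: power2_eq_square)
  finally show ?thesis .
qed

lemma d2_expand:
  fixes X :: "'x set" and I :: "'j set" and Phi :: "'j \<Rightarrow> 'x \<Rightarrow> real" and w :: "'x \<Rightarrow> real"
  assumes fX: "finite X" and fI: "finite I" and cI: "card I = card X" and pos: "\<forall>x\<in>X. w x > 0"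
    and orth: "\<forall>J\<in>I. \<forall>K\<in>I. (\<Sum>x\<in>X. w x * Phi J x * Phi K x) = (if J = K then 1 else 0)"
    and eigen: "\<forall>J\<in>I. \<forall>x\<in>X. (\<Sum>y\<in>X. G x y * Phi J y) = - Lam J * Phi J x"
    and J0: "J0 \<in> I" "\<forall>x\<in>X. Phi J0 x = 1" "Lam J0 = 0"
    and mu: "sum mu X = 1"
  shows "(d2 X G w mu t)\<^sup>2 = (\<Sum>J\<in>I - {J0}. exp (- 2 * t * Lam J) * (\<Sum>x\<in>X. mu x * Phi J x)\<^sup>2)"
proof -
  have compl: "\<forall>x\<in>X. \<forall>y\<in>X. (\<Sum>J\<in>I. Phi J x * Phi J y) * w y = (if x = y then 1 else 0)"
    using complete_onb[OF fX fI cI pos orth] by blast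
  define m where "m J = (\<Sum>x\<in>X. mu x * Phi J x)" for J
  have ev: "evolve X G mu t y / w y - 1 = (\<Sum>J\<in>I - {J0}. (exp (- t * Lam J) * m J) * Phi J y)" if y: "y \<in> X" for y
  proof -
    have "evolve X G mu t y = (\<Sum>x\<in>X. mu x * (\<Sum>J\<in>I. exp (- t * Lam J) * (Phi J x * Phi J y * w y)))"
      unfolding evolve_def using heat_expand[OF compl eigen _ y] by (intro sum.cong refl) auto
    also have "\<dots> = (\<Sum>J\<in>I. exp (- t * Lam J) * m J * Phi J y * w y)"
      unfolding m_def by (simp add: sum_distrib_left sum_distrib_right sum.swap[of _ X] algebra_simps)
    finally have "evolve X G mu t y / w y = (\<Sum>J\<in>I. exp (- t * Lam J) * m J * Phi J y)"
      using pos y by (simp add: sum_divide_distrib less_imp_neq[symmetric])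
    also have "\<dots> = exp (- t * Lam J0) * m J0 * Phi J0 y + (\<Sum>J\<in>I - {J0}. exp (- t * Lam J) * m J * Phi J y)"
      using J0(1) fI by (simp add: sum.remove)
    also have "exp (- t * Lam J0) * m J0 * Phi J0 y = 1"
      using J0 y mu unfolding m_def by simp
    finally show ?thesis by simp
  qed
  have "(\<Sum>y\<in>X. w y * (evolve X G mu t y / w y - 1)\<^sup>2) = (\<Sum>y\<in>X. w y * (\<Sum>J\<in>I - {J0}. (exp (- t * Lam J) * m J) * Phi J y)\<^sup>2)"
    using ev by (intro sum.cong refl) simp
  also have "\<dots> = (\<Sum>J\<in>I - {J0}. (exp (- t * Lam J) * m J)\<^sup>2)"
    by (rule orth_sq_sum[OF fX _ _ orth]) (use fI in auto)
  also have "\<dots> = (\<Sum>J\<in>I - {J0}. exp (- 2 * t * Lam J) * (m J)\<^sup>2)"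
    by (intro sum.cong refl) (simp add: power_mult_distrib power2_eq_square exp_add[symmetric])
  finally have eq: "(\<Sum>y\<in>X. w y * (evolve X G mu t y / w y - 1)\<^sup>2) = (\<Sum>J\<in>I - {J0}. exp (- 2 * t * Lam J) * (m J)\<^sup>2)" .
  have "(\<Sum>y\<in>X. w y * (evolve X G mu t y / w y - 1)\<^sup>2) \<ge> 0"
    using pos by (intro sum_nonneg) (simp add: less_imp_le)
  thus ?thesis unfolding d2_def using eq m_def by simp
qed


lemma eig_pos:
  fixes S :: "'a set" and L :: "'a \<Rightarrow> 'a \<Rightarrow> real" and w :: "'a \<Rightarrow> real" and phi :: "nat \<Rightarrow> 'a \<Rightarrow> real"
  assumes ch: "finite_irred_chain S L w"
    and eig: "orthonormal_eigendata S L w lam phi"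
    and j: "1 \<le> j" "j < card S"
  shows "lam j > 0"
proof -
  have fS: "finite S" and gen: "is_generator S L" and irr: "irreducible_gen S L" and st: "stationary S L w"
    using ch unfolding finite_irred_chain_def by auto
  have wpos: "\<forall>x\<in>S. w x > 0" and colsum: "\<forall>y\<in>S. (\<Sum>x\<in>S. w x * L x y) = 0"
    using st unfolding stationary_def by auto
  have offd: "\<forall>x\<in>S. \<forall>y\<in>S. x \<noteq> y \<longrightarrow> L x y \<ge> 0" and rowsum: "\<forall>x\<in>S. (\<Sum>y\<in>S. L x y) = 0"
    using gen unfolding is_generator_def by auto
  define f where "f = phi j"
  have ev: "\<forall>x\<in>S. (\<Sum>y\<in>S. L x y * f y) = - lam j * f x"
    using eig j unfolding orthonormal_eigendata_def f_def by auto
  have nrm: "(\<Sum>x\<in>S. w x * f x * f x) = 1"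
    using eig j unfolding orthonormal_eigendata_def f_def by auto
  have c0: "0 < card S" using j by simp
  have ort0: "(\<Sum>x\<in>S. w x * phi 0 x * phi j x) = (if 0 = j then 1 else 0)"
    using eig j c0 unfolding orthonormal_eigendata_def by blast
  have ort: "(\<Sum>x\<in>S. w x * phi 0 x * f x) = 0"
    using ort0 j unfolding f_def by simp
  have phi0: "\<forall>x\<in>S. phi 0 x = 1" using eig unfolding orthonormal_eigendata_def by auto
  hence ort': "(\<Sum>x\<in>S. w x * f x) = 0" using ort by simp
  define E where "E = (\<Sum>x\<in>S. \<Sum>y\<in>S. w x * L x y * (f x - f y)\<^sup>2)"
  have t1: "(\<Sum>x\<in>S. \<Sum>y\<in>S. w x * L x y * (f x * f x)) = 0"
  proof -
    have "(\<Sum>x\<in>S. \<Sum>y\<in>S. w x * L x y * (f x * f x)) = (\<Sum>x\<in>S. w x * (f x * f x) * (\<Sum>y\<in>S. L x y))"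
      by (simp add: sum_distrib_left mult_ac)
    also have "\<dots> = 0" using rowsum by simp
    finally show ?thesis .
  qed
  have t3: "(\<Sum>x\<in>S. \<Sum>y\<in>S. w x * L x y * (f y * f y)) = 0"
  proof -
    have "(\<Sum>x\<in>S. \<Sum>y\<in>S. w x * L x y * (f y * f y)) = (\<Sum>y\<in>S. \<Sum>x\<in>S. w x * L x y * (f y * f y))"
      by (rule sum.swap)
    also have "\<dots> = (\<Sum>y\<in>S. (f y * f y) * (\<Sum>x\<in>S. w x * L x y))"
      by (simp add: sum_distrib_left mult_ac)
    also have "\<dots> = 0" using colsum by simp
    finally show ?thesis .
  qed
  have t2: "(\<Sum>x\<in>S. \<Sum>y\<in>S. w x * L x y * (f x * f y)) = - lam j"
  proof -
    have "(\<Sum>x\<in>S. \<Sum>y\<in>S. w x * L x y * (f x * f y)) = (\<Sum>x\<in>S. w x * f x * (\<Sum>y\<in>S. L x y * f y))"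
      by (simp add: sum_distrib_left mult_ac)
    also have "\<dots> = (\<Sum>x\<in>S. - lam j * (w x * f x * f x))" using ev by (intro sum.cong refl) (simp add: mult_ac)
    also have "\<dots> = - lam j * (\<Sum>x\<in>S. w x * f x * f x)" by (rule sum_distrib_left[symmetric])
    also have "\<dots> = - lam j" using nrm by simp
    finally show ?thesis .
  qed
  have Eeq: "E = 2 * lam j"
  proof -
    have "E = (\<Sum>x\<in>S. \<Sum>y\<in>S. w x * L x y * (f x * f x) - 2 * (w x * L x y * (f x * f y)) + w x * L x y * (f y * f y))"
      unfolding E_def by (intro sum.cong refl) (simp add: power2_eq_square algebra_simps)
    also have "\<dots> = (\<Sum>x\<in>S. \<Sum>y\<in>S. w x * L x y * (f x * f x)) - 2 * (\<Sum>x\<in>S. \<Sum>y\<in>S. w x * L x y * (f x * f y))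
        + (\<Sum>x\<in>S. \<Sum>y\<in>S. w x * L x y * (f y * f y))"
      by (simp only: sum.distrib sum_subtractf sum_distrib_left)
    also have "\<dots> = 2 * lam j" by (simp only: t1 t2 t3)
    finally show ?thesis .
  qed
  have nn: "\<And>x y. x \<in> S \<Longrightarrow> y \<in> S \<Longrightarrow> w x * L x y * (f x - f y)\<^sup>2 \<ge> 0"
  proof -
    fix x y assume xy: "x \<in> S" "y \<in> S"
    show "w x * L x y * (f x - f y)\<^sup>2 \<ge> 0"
    proof (cases "x = y")
      case True thus ?thesis by simp
    next
      case False
      hence "L x y \<ge> 0" using offd xy by auto
      thus ?thesis using wpos xy by (intro mult_nonneg_nonneg) auto
    qed
  qed
  have Enn: "E \<ge> 0" unfolding E_def using nn by (intro sum_nonneg) auto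
  show ?thesis
  proof (rule ccontr)
    assume "\<not> lam j > 0"
    hence "E = 0" using Eeq Enn by simp
    hence z: "\<forall>x\<in>S. \<forall>y\<in>S. w x * L x y * (f x - f y)\<^sup>2 = 0"
      unfolding E_def using fS nn
      by (subst (asm) sum_nonneg_eq_0_iff) (auto intro: sum_nonneg simp: sum_nonneg_eq_0_iff)
    have edge: "f u = f v" if "(u, v) \<in> {(u, v). u \<in> S \<and> v \<in> S \<and> u \<noteq> v \<and> L u v > 0}" for u v
    proof -
      from that have uv: "u \<in> S" "v \<in> S" "L u v > 0" by auto
      hence "w u * L u v > 0" using wpos by simp
      moreover have "w u * L u v * (f u - f v)\<^sup>2 = 0" using z uv(1,2) by blast
      ultimately show ?thesis by (metis less_irrefl mult_eq_0_iff power_eq_0_iff eq_iff_diff_eq_0)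
    qed
    have const: "f x = f y" if "x \<in> S" "y \<in> S" for x y
    proof -
      have "(x, y) \<in> {(u, v). u \<in> S \<and> v \<in> S \<and> u \<noteq> v \<and> L u v > 0}\<^sup>*"
        using irr that unfolding irreducible_gen_def by blast
      thus ?thesis
      proof (induction rule: rtrancl_induct)
        case base thus ?case by simp
      next
        case (step y z) thus ?case using edge by simp
      qed
    qed
    obtain x0 where x0: "x0 \<in> S" using c0 by (metis card.empty card.infinite less_irrefl ex_in_conv)
    have "(\<Sum>x\<in>S. w x * f x) = (\<Sum>x\<in>S. w x) * f x0"
      by (simp add: sum_distrib_right const[OF _ x0])
    hence "f x0 = 0" using ort' st unfolding stationary_def by simp
    hence "(\<Sum>x\<in>S. w x * f x * f x) = 0" using const[OF _ x0] by simp
    thus False using nrm by simp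
  qed
qed


lemma prod_ind:
  fixes x y :: "nat \<Rightarrow> 'a"
  assumes "finite K"
  shows "(\<Prod>j\<in>K. (if x j = y j then 1 else 0) :: real) = (if \<forall>j\<in>K. x j = y j then 1 else 0)"
  using assms by (induction K rule: finite_induct) auto

lemma sum_slice:
  fixes g :: "(nat \<Rightarrow> 'a) \<Rightarrow> real"
  assumes x: "x \<in> PiE {..<l} S" and i: "i < l" and finS: "\<forall>i<l. finite (S i)"
  shows "(\<Sum>y\<in>PiE {..<l} S. g y * (\<Prod>j\<in>{..<l} - {i}. (if x j = y j then 1 else 0)))
       = (\<Sum>u\<in>S i. g (x(i := u)))"
proof -
  have fin: "finite ({..<l} - {i})" by simp
  have "(\<Sum>y\<in>PiE {..<l} S. g y * (\<Prod>j\<in>{..<l} - {i}. (if x j = y j then 1 else 0)))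
      = (\<Sum>y\<in>PiE {..<l} S. if (\<forall>j\<in>{..<l} - {i}. x j = y j) then g y else 0)"
    by (intro sum.cong refl) (simp add: prod_ind[OF fin])
  also have "\<dots> = (\<Sum>y\<in>{y \<in> PiE {..<l} S. \<forall>j\<in>{..<l} - {i}. x j = y j}. g y)"
    by (rule sum.inter_filter[symmetric], rule finite_PiE) (use finS in auto)
  also have "{y \<in> PiE {..<l} S. \<forall>j\<in>{..<l} - {i}. x j = y j} = (\<lambda>u. x(i := u)) ` S i"
  proof (intro equalityI subsetI)
    fix y assume y: "y \<in> {y \<in> PiE {..<l} S. \<forall>j\<in>{..<l} - {i}. x j = y j}"
    have "y = x(i := y i)"
    proof
      fix j show "y j = (x(i := y i)) j"
      proof (cases "j < l")
        case True thus ?thesis using y by auto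
      next
        case False thus ?thesis using y x i by (auto simp: PiE_def extensional_def)
      qed
    qed
    moreover have "y i \<in> S i" using y i by (auto simp: PiE_def Pi_def)
    ultimately show "y \<in> (\<lambda>u. x(i := u)) ` S i" by blast
  next
    fix y assume "y \<in> (\<lambda>u. x(i := u)) ` S i"
    then obtain u where u: "u \<in> S i" "y = x(i := u)" by blast
    thus "y \<in> {y \<in> PiE {..<l} S. \<forall>j\<in>{..<l} - {i}. x j = y j}"
      using x i by (auto simp: PiE_def Pi_def extensional_def)
  qed
  also have "(\<Sum>y\<in>(\<lambda>u. x(i := u)) ` S i. g y) = (\<Sum>u\<in>S i. g (x(i := u)))"
    by (subst sum.reindex) (auto simp: inj_on_def dest: fun_cong[where x = i])
  finally show ?thesis .
qed

lemma prod_eigen: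
  fixes S :: "nat \<Rightarrow> 'a set" and L :: "nat \<Rightarrow> 'a \<Rightarrow> 'a \<Rightarrow> real"
    and phi :: "nat \<Rightarrow> nat \<Rightarrow> 'a \<Rightarrow> real" and lam :: "nat \<Rightarrow> nat \<Rightarrow> real"
  assumes eig: "\<And>i. i < l \<Longrightarrow> \<forall>j<card (S i). \<forall>x\<in>S i. (\<Sum>y\<in>S i. L i x y * phi i j y) = - lam i j * phi i j x"
    and J: "J \<in> PiE {..<l} (\<lambda>i. {..<card (S i)})" and x: "x \<in> PiE {..<l} S"
    and finS: "\<forall>i<l. finite (S i)"
  shows "(\<Sum>y\<in>PiE {..<l} S. prod_gen l p L x y * (\<Prod>i<l. phi i (J i) (y i)))
       = - (\<Sum>i<l. p i * lam i (J i)) * (\<Prod>i<l. phi i (J i) (x i))"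
proof -
  have "(\<Sum>y\<in>PiE {..<l} S. prod_gen l p L x y * (\<Prod>i<l. phi i (J i) (y i)))
      = (\<Sum>i<l. p i * (\<Sum>y\<in>PiE {..<l} S. (L i (x i) (y i) * (\<Prod>k<l. phi k (J k) (y k)))
           * (\<Prod>j\<in>{..<l} - {i}. (if x j = y j then 1 else 0))))"
    unfolding prod_gen_def sum_distrib_right sum_distrib_left
    by (subst sum.swap) (intro sum.cong refl, simp add: mult_ac)
  also have "\<dots> = (\<Sum>i<l. p i * (- lam i (J i) * (\<Prod>k<l. phi k (J k) (x k))))"
  proof (intro sum.cong refl)
    fix i assume i: "i \<in> {..<l}"
    have JI: "J i < card (S i)" using J i by (auto simp: PiE_def Pi_def)
    have xi: "x i \<in> S i" using x i by (auto simp: PiE_def Pi_def)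
    define R where "R = (\<Prod>k\<in>{..<l} - {i}. phi k (J k) (x k))"
    have split: "(\<Prod>k<l. phi k (J k) (z k)) = phi i (J i) (z i) * (\<Prod>k\<in>{..<l} - {i}. phi k (J k) (z k))" for z
      using i by (subst prod.remove[of _ i]) auto
    have "(\<Sum>y\<in>PiE {..<l} S. (L i (x i) (y i) * (\<Prod>k<l. phi k (J k) (y k)))
           * (\<Prod>j\<in>{..<l} - {i}. (if x j = y j then 1 else 0)))
        = (\<Sum>u\<in>S i. L i (x i) ((x(i := u)) i) * (\<Prod>k<l. phi k (J k) ((x(i := u)) k)))"
      by (rule sum_slice[OF x]) (use i finS in auto)
    also have "\<dots> = (\<Sum>u\<in>S i. L i (x i) u * phi i (J i) u * R)"
    proof (intro sum.cong refl)
      fix u assume "u \<in> S i"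
      have RR: "(\<Prod>k\<in>{..<l} - {i}. phi k (J k) ((x(i := u)) k)) = R"
        unfolding R_def by (intro prod.cong refl) auto
      show "L i (x i) ((x(i := u)) i) * (\<Prod>k<l. phi k (J k) ((x(i := u)) k)) = L i (x i) u * phi i (J i) u * R"
        by (simp only: split[of "x(i := u)"] RR) simp
    qed
    also have "\<dots> = (\<Sum>u\<in>S i. L i (x i) u * phi i (J i) u) * R" by (simp add: sum_distrib_right)
    also have "\<dots> = - lam i (J i) * phi i (J i) (x i) * R" using eig[of i] i JI xi by simp
    also have "\<dots> = - lam i (J i) * (\<Prod>k<l. phi k (J k) (x k))" by (simp add: split R_def)
    finally show "p i * (\<Sum>y\<in>PiE {..<l} S. (L i (x i) (y i) * (\<Prod>k<l. phi k (J k) (y k)))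
           * (\<Prod>j\<in>{..<l} - {i}. (if x j = y j then 1 else 0)))
        = p i * (- lam i (J i) * (\<Prod>k<l. phi k (J k) (x k)))" by simp
  qed
  also have "\<dots> = - (\<Sum>i<l. p i * lam i (J i)) * (\<Prod>i<l. phi i (J i) (x i))"
    by (simp add: sum_distrib_right sum_negf mult.assoc)
  finally show ?thesis .
qed


lemma prod_d2_formula:
  fixes S :: "nat \<Rightarrow> 'a set" and L :: "nat \<Rightarrow> 'a \<Rightarrow> 'a \<Rightarrow> real"
    and w mu :: "nat \<Rightarrow> 'a \<Rightarrow> real" and p :: "nat \<Rightarrow> real"
    and phi :: "nat \<Rightarrow> nat \<Rightarrow> 'a \<Rightarrow> real" and lam :: "nat \<Rightarrow> nat \<Rightarrow> real"
  assumes chains: "\<And>i. i < l \<Longrightarrow> finite_irred_chain (S i) (L i) (w i)"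
    and init: "\<And>i. i < l \<Longrightarrow> is_distribution (S i) (mu i)"
    and eig: "\<And>i. i < l \<Longrightarrow> orthonormal_eigendata (S i) (L i) (w i) (lam i) (phi i)"
  shows "(prod_d2 l S p L w mu t)\<^sup>2 =
    (\<Prod>i<l. 1 + (\<Sum>j\<in>{1..<card (S i)}. exp (- 2 * t * (p i * lam i j)) * (\<Sum>u\<in>S i. mu i u * phi i j u)\<^sup>2)) - 1"
proof -
  define X where "X = PiE {..<l} S"
  define I where "I = PiE {..<l} (\<lambda>i. {..<card (S i)})"
  define Phi where "Phi J x = (\<Prod>i<l. phi i (J i) (x i))" for J :: "nat \<Rightarrow> nat" and x :: "nat \<Rightarrow> 'a"
  define Lam where "Lam J = (\<Sum>i<l. p i * lam i (J i))" for J :: "nat \<Rightarrow> nat"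
  define J0 where "J0 = restrict (\<lambda>i. 0::nat) {..<l}"
  define m where "m i j = (\<Sum>u\<in>S i. mu i u * phi i j u)" for i j
  have finS: "\<forall>i<l. finite (S i)" and neS: "\<forall>i<l. S i \<noteq> {}"
    using chains unfolding finite_irred_chain_def by auto
  have cpos: "\<forall>i<l. card (S i) > 0" using finS neS by (simp add: card_gt_0_iff)
  have wpos: "\<forall>i<l. \<forall>u\<in>S i. w i u > 0"
    using chains unfolding finite_irred_chain_def stationary_def by auto
  have musum: "\<forall>i<l. sum (mu i) (S i) = 1" using init unfolding is_distribution_def by auto
  have eigd: "\<forall>i<l. lam i 0 = 0 \<and> (\<forall>x\<in>S i. phi i 0 x = 1) \<and>
     (\<forall>j<card (S i). \<forall>x\<in>S i. (\<Sum>y\<in>S i. L i x y * phi i j y) = - lam i j * phi i j x) \<and>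
     (\<forall>j<card (S i). \<forall>k<card (S i). (\<Sum>x\<in>S i. w i x * phi i j x * phi i k x) = (if j = k then 1 else 0))"
    using eig unfolding orthonormal_eigendata_def by auto
  have fX: "finite X" unfolding X_def using finS by (intro finite_PiE) auto
  have fI: "finite I" unfolding I_def by (intro finite_PiE) auto
  have cI: "card I = card X" unfolding I_def X_def using finS by (simp add: card_PiE)
  have pos: "\<forall>x\<in>X. prod_measure l w x > 0"
    unfolding X_def prod_measure_def using wpos by (auto intro!: prod_pos simp: PiE_def Pi_def)
  have orth: "\<forall>J\<in>I. \<forall>K\<in>I. (\<Sum>x\<in>X. prod_measure l w x * Phi J x * Phi K x) = (if J = K then 1 else 0)"
  proof (intro ballI)
    fix J K assume J: "J \<in> I" and K: "K \<in> I"
    have "(\<Sum>x\<in>X. prod_measure l w x * Phi J x * Phi K x) = (\<Sum>x\<in>X. \<Prod>i<l. w i (x i) * phi i (J i) (x i) * phi i (K i) (x i))"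
      unfolding prod_measure_def Phi_def by (simp add: prod.distrib)
    also have "\<dots> = (\<Prod>i<l. \<Sum>u\<in>S i. w i u * phi i (J i) u * phi i (K i) u)"
      unfolding X_def by (rule prod_sum_PiE[symmetric]) (use finS in auto)
    also have "\<dots> = (\<Prod>i<l. if J i = K i then 1 else 0)"
    proof (intro prod.cong refl)
      fix i assume i: "i \<in> {..<l}"
      have "J i < card (S i)" "K i < card (S i)" using J K i unfolding I_def by (auto simp: PiE_def Pi_def)
      thus "(\<Sum>u\<in>S i. w i u * phi i (J i) u * phi i (K i) u) = (if J i = K i then 1 else 0)"
        using eigd i by auto
    qed
    also have "\<dots> = (if J = K then 1 else 0)"
    proof (cases "J = K")
      case True thus ?thesis by simp
    next
      case False
      then obtain i where "J i \<noteq> K i" by auto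
      moreover have "i < l"
      proof (rule ccontr)
        assume "\<not> i < l"
        hence "J i = undefined" "K i = undefined" using J K unfolding I_def by (auto simp: PiE_def extensional_def)
        thus False using \<open>J i \<noteq> K i\<close> by simp
      qed
      ultimately have "(\<Prod>i<l. if J i = K i then 1 else (0::real)) = 0"
        by (subst prod_zero_iff) auto
      thus ?thesis using False by simp
    qed
    finally show "(\<Sum>x\<in>X. prod_measure l w x * Phi J x * Phi K x) = (if J = K then 1 else 0)" .
  qed
  have eigen: "\<forall>J\<in>I. \<forall>x\<in>X. (\<Sum>y\<in>X. prod_gen l p L x y * Phi J y) = - Lam J * Phi J x"
    unfolding X_def I_def Phi_def Lam_def using eigd finS by (intro ballI prod_eigen) auto
  have J0I: "J0 \<in> I" unfolding J0_def I_def using cpos by auto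
  have Phi0: "\<forall>x\<in>X. Phi J0 x = 1" unfolding Phi_def J0_def X_def using eigd by (auto simp: PiE_def Pi_def)
  have Lam0: "Lam J0 = 0" unfolding Lam_def J0_def using eigd by simp
  have musumX: "sum (prod_measure l mu) X = 1"
  proof -
    have "sum (prod_measure l mu) X = (\<Prod>i<l. \<Sum>u\<in>S i. mu i u)"
      unfolding X_def prod_measure_def by (rule prod_sum_PiE[symmetric]) (use finS in auto)
    thus ?thesis using musum by simp
  qed
  have D: "(d2 X (prod_gen l p L) (prod_measure l w) (prod_measure l mu) t)\<^sup>2 =
     (\<Sum>J\<in>I - {J0}. exp (- 2 * t * Lam J) * (\<Sum>x\<in>X. prod_measure l mu x * Phi J x)\<^sup>2)"
    apply (rule d2_expand)
    using fX fI cI pos orth eigen J0I Phi0 Lam0 musumX by auto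
  define h where "h i j = exp (- 2 * t * (p i * lam i j)) * (m i j)\<^sup>2" for i j
  have mJ: "(\<Sum>x\<in>X. prod_measure l mu x * Phi J x) = (\<Prod>i<l. m i (J i))" for J
  proof -
    have "(\<Sum>x\<in>X. prod_measure l mu x * Phi J x) = (\<Sum>x\<in>X. \<Prod>i<l. mu i (x i) * phi i (J i) (x i))"
      unfolding prod_measure_def Phi_def by (simp add: prod.distrib)
    also have "\<dots> = (\<Prod>i<l. m i (J i))"
      unfolding X_def m_def by (rule prod_sum_PiE[symmetric]) (use finS in auto)
    finally show ?thesis .
  qed
  have termJ: "exp (- 2 * t * Lam J) * (\<Sum>x\<in>X. prod_measure l mu x * Phi J x)\<^sup>2 = (\<Prod>i<l. h i (J i))" for J
  proof -
    have "exp (- 2 * t * Lam J) = (\<Prod>i<l. exp (- 2 * t * (p i * lam i (J i))))"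
      unfolding Lam_def by (simp add: sum_distrib_left exp_sum)
    thus ?thesis unfolding mJ h_def by (simp add: prod.distrib power_mult_distrib prod_power_distrib)
  qed
  have sumI: "(\<Sum>J\<in>I. \<Prod>i<l. h i (J i)) = (\<Prod>i<l. \<Sum>j<card (S i). h i j)"
    unfolding I_def by (rule prod_sum_PiE[symmetric]) auto
  have h0: "h i 0 = 1" if "i < l" for i
    using that eigd musum unfolding h_def m_def by simp
  have term0: "(\<Prod>i<l. h i (J0 i)) = 1" unfolding J0_def using h0 by simp
  have inner: "(\<Sum>j<card (S i). h i j) = 1 + (\<Sum>j\<in>{1..<card (S i)}. h i j)" if "i < l" for i
  proof -
    have "(\<Sum>j<card (S i). h i j) = (\<Sum>j\<in>{0..<card (S i)}. h i j)" by (simp add: lessThan_atLeast0)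
    also have "\<dots> = h i 0 + (\<Sum>j\<in>{Suc 0..<card (S i)}. h i j)"
      using cpos that by (subst sum.atLeast_Suc_lessThan) auto
    finally show ?thesis using h0 that by simp
  qed
  have "(prod_d2 l S p L w mu t)\<^sup>2 = (\<Sum>J\<in>I - {J0}. \<Prod>i<l. h i (J i))"
    unfolding prod_d2_def prod_space_def using D termJ X_def by simp
  also have "\<dots> = (\<Sum>J\<in>I. \<Prod>i<l. h i (J i)) - 1"
    using J0I fI term0 by (simp add: sum_diff1)
  also have "\<dots> = (\<Prod>i<l. 1 + (\<Sum>j\<in>{1..<card (S i)}. h i j)) - 1"
    unfolding sumI using inner by simp
  finally show ?thesis unfolding h_def m_def .
qed


lemma key_ineq:
  fixes s t x :: real
  assumes s: "0 < s" and st: "s \<le> t" and x: "0 \<le> x"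
  shows "t * exp (- s * x) - s * exp (- t * x) \<le> t - s"
proof -
  define g where "g y = t * exp (- s * y) - s * exp (- t * y)" for y
  have "g x \<le> g 0"
  proof (rule DERIV_nonpos_imp_nonincreasing[OF x])
    fix y assume y: "0 \<le> y" "y \<le> x"
    have "DERIV g y :> t * (exp (- s * y) * (- s)) - s * (exp (- t * y) * (- t))"
      unfolding g_def by (auto intro!: derivative_eq_intros)
    moreover have "t * (exp (- s * y) * (- s)) - s * (exp (- t * y) * (- t)) = s * t * (exp (- t * y) - exp (- s * y))"
      by (simp add: algebra_simps)
    moreover have "exp (- t * y) \<le> exp (- s * y)" using st y by (simp add: mult_right_mono)
    moreover have "s * t \<ge> 0" using s st by simp
    ultimately show "\<exists>d. DERIV g y :> d \<and> d \<le> 0"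
      by (metis diff_le_0_iff_le mult_nonneg_nonpos)
  qed
  thus ?thesis unfolding g_def by simp
qed

lemma key_exp:
  fixes s t u v :: real
  assumes s: "0 < s" and st: "s \<le> t" and uv: "u \<le> v"
  shows "exp (2 * (t - s) * u) * (exp (- 2 * t * u) - exp (- 2 * t * v)) \<le> t / s * (exp (- 2 * s * u) - exp (- 2 * s * v))"
proof -
  define x where "x = 2 * (v - u)"
  have x: "x \<ge> 0" using uv unfolding x_def by simp
  have e1: "exp (2 * (t - s) * u) * exp (- 2 * t * u) = exp (- 2 * s * u)" by (simp add: exp_add[symmetric] algebra_simps)
  have e2: "exp (2 * (t - s) * u) * exp (- 2 * t * v) = exp (- 2 * s * u) * exp (- t * x)"
    unfolding x_def by (simp add: exp_add[symmetric] algebra_simps)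
  have e3: "exp (- 2 * s * v) = exp (- 2 * s * u) * exp (- s * x)"
    unfolding x_def by (simp add: exp_add[symmetric] algebra_simps)
  have k: "s * (1 - exp (- t * x)) \<le> t * (1 - exp (- s * x))"
    using key_ineq[OF s st x] by (simp add: algebra_simps)
  have "exp (2 * (t - s) * u) * (exp (- 2 * t * u) - exp (- 2 * t * v)) = exp (- 2 * s * u) * (1 - exp (- t * x))"
    using e1 e2 by (simp add: algebra_simps)
  also have "\<dots> \<le> exp (- 2 * s * u) * (t / s * (1 - exp (- s * x)))"
    using k s by (intro mult_left_mono) (auto simp: field_simps)
  also have "\<dots> = t / s * (exp (- 2 * s * u) - exp (- 2 * s * v))"
    using e3 by (simp add: algebra_simps)
  finally show ?thesis .
qed

definition AA :: "(nat \<Rightarrow> real) \<Rightarrow> nat \<Rightarrow> real" where "AA a j = (\<Sum>k=1..j. a k)"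
definition jdef :: "nat \<Rightarrow> (nat \<Rightarrow> real) \<Rightarrow> real \<Rightarrow> bool" where
  "jdef N a c \<longleftrightarrow> (\<exists>j. 1 \<le> j \<and> j \<le> N \<and> AA a j > c)"
definition jJ :: "nat \<Rightarrow> (nat \<Rightarrow> real) \<Rightarrow> real \<Rightarrow> nat" where
  "jJ N a c = (LEAST j. 1 \<le> j \<and> j \<le> N \<and> AA a j > c)"
definition tT :: "nat \<Rightarrow> (nat \<Rightarrow> real) \<Rightarrow> (nat \<Rightarrow> real) \<Rightarrow> real \<Rightarrow> real" where
  "tT N a r c = Max ((\<lambda>j. ln (1 + AA a j) / (2 * r j)) ` {jJ N a c..N})"
definition FF :: "nat \<Rightarrow> (nat \<Rightarrow> real) \<Rightarrow> (nat \<Rightarrow> real) \<Rightarrow> real \<Rightarrow> real" where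
  "FF N a r t = (\<Sum>k=1..N. a k * exp (- 2 * t * r k))"
definition good :: "nat \<Rightarrow> (nat \<Rightarrow> real) \<Rightarrow> (nat \<Rightarrow> real) \<Rightarrow> bool" where
  "good N a r \<longleftrightarrow> (\<forall>k. 1 \<le> k \<longrightarrow> k \<le> N \<longrightarrow> a k \<ge> 0 \<and> r k > 0) \<and>
     (\<forall>i j. 1 \<le> i \<longrightarrow> i \<le> j \<longrightarrow> j \<le> N \<longrightarrow> r i \<le> r j)"

lemma jJ_props:
  assumes "jdef N a c"
  shows "1 \<le> jJ N a c" "jJ N a c \<le> N" "AA a (jJ N a c) > c"
    "\<And>j. 1 \<le> j \<Longrightarrow> j < jJ N a c \<Longrightarrow> AA a j \<le> c"
proof -
  obtain j0 where j0: "1 \<le> j0 \<and> j0 \<le> N \<and> AA a j0 > c" using assms unfolding jdef_def by blast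
  have "1 \<le> jJ N a c \<and> jJ N a c \<le> N \<and> AA a (jJ N a c) > c"
    unfolding jJ_def by (rule LeastI[of _ j0]) (rule j0)
  thus "1 \<le> jJ N a c" "jJ N a c \<le> N" "AA a (jJ N a c) > c" by auto
  fix j assume j: "1 \<le> j" "j < jJ N a c"
  have "j \<le> N" using j \<open>jJ N a c \<le> N\<close> by simp
  show "AA a j \<le> c"
  proof (rule ccontr)
    assume "\<not> AA a j \<le> c"
    hence "jJ N a c \<le> j" unfolding jJ_def using j \<open>j \<le> N\<close> by (intro Least_le) auto
    thus False using j by simp
  qed
qed

lemma AA_prev:
  assumes "jdef N a c" "c \<ge> 0"
  shows "AA a (jJ N a c - 1) \<le> c"
proof (cases "jJ N a c = 1")
  case True thus ?thesis using assms by (simp add: AA_def)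
next
  case False
  thus ?thesis using jJ_props[OF assms(1)] by (intro jJ_props(4)[OF assms(1)]) auto
qed

lemma AA_nonneg:
  assumes "good N a r" "j \<le> N"
  shows "AA a j \<ge> 0"
  unfolding AA_def using assms unfolding good_def by (intro sum_nonneg) auto

lemma AA_Suc: "AA a (Suc j) = AA a j + a (Suc j)"
  unfolding AA_def by simp

lemma AA_mono:
  assumes "good N a r" "i \<le> j" "j \<le> N"
  shows "AA a i \<le> AA a j"
  unfolding AA_def using assms unfolding good_def by (intro sum_mono2) auto

lemma tT_props:
  assumes g: "good N a r" and jd: "jdef N a c" and c: "c > 0"
  shows "\<And>j. jJ N a c \<le> j \<Longrightarrow> j \<le> N \<Longrightarrow> AA a j \<le> exp (2 * tT N a r c * r j) - 1"
    and "\<exists>j. jJ N a c \<le> j \<and> j \<le> N \<and> tT N a r c = ln (1 + AA a j) / (2 * r j)"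
    and "tT N a r c > 0"
proof -
  note jp = jJ_props[OF jd]
  define V where "V = (\<lambda>j. ln (1 + AA a j) / (2 * r j)) ` {jJ N a c..N}"
  have fV: "finite V" and neV: "V \<noteq> {}" unfolding V_def using jp by auto
  have ge: "ln (1 + AA a j) / (2 * r j) \<le> tT N a r c" if "jJ N a c \<le> j" "j \<le> N" for j
    unfolding tT_def V_def[symmetric] using fV that unfolding V_def by (intro Max_ge) auto
  show "AA a j \<le> exp (2 * tT N a r c * r j) - 1" if j: "jJ N a c \<le> j" "j \<le> N" for j
  proof -
    have rp: "r j > 0" using g j jp unfolding good_def by auto
    have An: "AA a j \<ge> 0" using AA_nonneg[OF g j(2)] .
    have "ln (1 + AA a j) \<le> 2 * tT N a r c * r j"
      using ge[OF j] rp by (simp add: divide_le_eq mult_ac)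
    hence "exp (ln (1 + AA a j)) \<le> exp (2 * tT N a r c * r j)" by simp
    thus ?thesis using An by simp
  qed
  have "tT N a r c \<in> V" unfolding tT_def V_def[symmetric] using fV neV by (rule Max_in)
  thus "\<exists>j. jJ N a c \<le> j \<and> j \<le> N \<and> tT N a r c = ln (1 + AA a j) / (2 * r j)"
    unfolding V_def by auto
  have rp: "r (jJ N a c) > 0" using g jp unfolding good_def by auto
  have "ln (1 + AA a (jJ N a c)) > 0" using jp c by simp
  hence "ln (1 + AA a (jJ N a c)) / (2 * r (jJ N a c)) > 0" using rp by simp
  thus "tT N a r c > 0" using ge[of "jJ N a c"] jp by simp
qed


lemma sum_split_at:
  fixes f :: "nat \<Rightarrow> real"
  assumes "1 \<le> m" "m \<le> Suc N"
  shows "(\<Sum>k=1..N. f k) = (\<Sum>k=1..m-1. f k) + (\<Sum>k=m..N. f k)"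
proof -
  have "{1..N} = {1..m-1} \<union> {m..N}" using assms by auto
  moreover have "{1..m-1} \<inter> {m..N} = {}" using assms by auto
  ultimately show ?thesis by (simp add: sum.union_disjoint)
qed

lemma FF_nonneg: "good N a r \<Longrightarrow> FF N a r t \<ge> 0"
  unfolding FF_def good_def by (intro sum_nonneg) auto

lemma FF_antimono:
  assumes g: "good N a r" and t: "t1 \<le> t2"
  shows "FF N a r t2 \<le> FF N a r t1"
  unfolding FF_def
proof (intro sum_mono)
  fix k assume k: "k \<in> {1..N}"
  hence "a k \<ge> 0" "r k > 0" using g unfolding good_def by auto
  thus "a k * exp (- 2 * t2 * r k) \<le> a k * exp (- 2 * t1 * r k)"
    using t by (intro mult_left_mono) (auto simp: mult_right_mono)
qed

lemma FF_lower_j: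
  assumes g: "good N a r" and j: "1 \<le> j" "j \<le> N" and t: "t \<ge> 0"
  shows "AA a j * exp (- 2 * t * r j) \<le> FF N a r t"
proof -
  have "AA a j * exp (- 2 * t * r j) = (\<Sum>k=1..j. a k * exp (- 2 * t * r j))"
    unfolding AA_def by (simp add: sum_distrib_right)
  also have "\<dots> \<le> (\<Sum>k=1..j. a k * exp (- 2 * t * r k))"
  proof (intro sum_mono)
    fix k assume k: "k \<in> {1..j}"
    hence "a k \<ge> 0" "r k \<le> r j" using g j unfolding good_def by auto
    thus "a k * exp (- 2 * t * r j) \<le> a k * exp (- 2 * t * r k)"
      using t by (intro mult_left_mono) (auto simp: mult_left_mono)
  qed
  also have "\<dots> \<le> FF N a r t"
    unfolding FF_def using g j unfolding good_def by (intro sum_mono2) (auto intro!: mult_nonneg_nonneg)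
  finally show ?thesis .
qed

lemma FF_lower_c:
  assumes g: "good N a r" and jd: "jdef N a c" and t: "t \<ge> 0"
  shows "c * exp (- 2 * t * r (jJ N a c)) \<le> FF N a r t"
proof -
  note jp = jJ_props[OF jd]
  have "c * exp (- 2 * t * r (jJ N a c)) \<le> AA a (jJ N a c) * exp (- 2 * t * r (jJ N a c))"
    using jp by (intro mult_right_mono) auto
  also have "\<dots> \<le> FF N a r t" using FF_lower_j[OF g jp(1) jp(2) t] .
  finally show ?thesis .
qed

lemma FF_lower:
  assumes g: "good N a r" and jd: "jdef N a c" and c: "c > 0" and t: "t \<ge> 0"
  shows "exp (2 * (tT N a r c - t) * r (jJ N a c)) - 1 \<le> FF N a r t"
proof -
  note jp = jJ_props[OF jd]
  define T where "T = tT N a r c"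
  obtain j where j: "jJ N a c \<le> j" "j \<le> N" "T = ln (1 + AA a j) / (2 * r j)"
    using tT_props(2)[OF g jd c] unfolding T_def by blast
  have rj: "r j > 0" "r (jJ N a c) \<le> r j" using g j jp unfolding good_def by auto
  have An: "AA a j \<ge> 0" using AA_nonneg[OF g j(2)] .
  have AT: "AA a j = exp (2 * T * r j) - 1"
  proof -
    have "2 * T * r j = ln (1 + AA a j)" using j(3) rj by simp
    thus ?thesis using An by simp
  qed
  show ?thesis
  proof (cases "T \<ge> t")
    case False
    hence "exp (2 * (T - t) * r (jJ N a c)) \<le> 1"
      using jp g unfolding good_def by (auto intro!: mult_nonpos_nonneg)
    thus ?thesis using FF_nonneg[OF g] unfolding T_def by (smt (verit))
  next
    case True
    have "FF N a r t \<ge> AA a j * exp (- 2 * t * r j)"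
      using FF_lower_j[OF g _ j(2) t] jp j by simp
    also have "AA a j * exp (- 2 * t * r j) = exp (2 * (T - t) * r j) - exp (- 2 * t * r j)"
      unfolding AT by (simp add: algebra_simps exp_add[symmetric])
    also have "\<dots> \<ge> exp (2 * (T - t) * r (jJ N a c)) - 1"
    proof -
      have "exp (- 2 * t * r j) \<le> 1" using t rj by simp
      moreover have "exp (2 * (T - t) * r (jJ N a c)) \<le> exp (2 * (T - t) * r j)"
        using True rj by (simp add: mult_left_mono)
      ultimately show ?thesis by linarith
    qed
    finally show ?thesis unfolding T_def by simp
  qed
qed

lemma tail_bound:
  assumes g: "good N a r" and jd: "jdef N a c" and c: "c > 0" and t: "t > tT N a r c"
  shows "jJ N a c \<le> m \<Longrightarrow> m \<le> N \<Longrightarrow>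
    (\<Sum>k=m..N. a k * exp (- 2 * t * r k)) + AA a (m - 1) * exp (- 2 * t * r m)
      \<le> t / (t - tT N a r c) * exp (- 2 * (t - tT N a r c) * r m)"
proof -
  note jp = jJ_props[OF jd]
  define T where "T = tT N a r c"
  define s where "s = t - T"
  have Tp: "T > 0" using tT_props(3)[OF g jd c] unfolding T_def .
  have sp: "s > 0" using t unfolding s_def T_def by simp
  have ts: "t / s \<ge> 1" using sp Tp unfolding s_def by simp
  have Ab: "AA a j \<le> exp (2 * T * r j) - 1" if "jJ N a c \<le> j" "j \<le> N" for j
    using tT_props(1)[OF g jd c that] unfolding T_def .
  have rp: "\<And>k. 1 \<le> k \<Longrightarrow> k \<le> N \<Longrightarrow> r k > 0" using g unfolding good_def by auto
  define P where "P m \<longleftrightarrow> (\<Sum>k=m..N. a k * exp (- 2 * t * r k)) + AA a (m - 1) * exp (- 2 * t * r m)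
      \<le> t / s * exp (- 2 * s * r m)" for m
  have "\<forall>m. jJ N a c \<le> m \<and> m = N - d \<longrightarrow> P m" for d
  proof (induction d)
    case 0
    show ?case
    proof (intro allI impI)
      fix m assume m: "jJ N a c \<le> m \<and> m = N - 0"
      hence mN: "m = N" and N1: "1 \<le> N" using jp by auto
      have "(\<Sum>k=m..N. a k * exp (- 2 * t * r k)) + AA a (m - 1) * exp (- 2 * t * r m)
          = AA a N * exp (- 2 * t * r N)"
      proof -
        have "AA a N = AA a (N - 1) + a N" using AA_Suc[of a "N - 1"] N1 by simp
        thus ?thesis using mN by (simp add: algebra_simps)
      qed
      also have "\<dots> \<le> exp (2 * T * r N) * exp (- 2 * t * r N)"
        using Ab[of N] jp N1 by (intro mult_right_mono) auto
      also have "\<dots> = exp (- 2 * s * r N)" unfolding s_def by (simp add: exp_add[symmetric] algebra_simps)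
      also have "\<dots> \<le> t / s * exp (- 2 * s * r N)" using mult_right_mono[OF ts, of "exp (- 2 * s * r N)"] by simp
      finally show "P m" unfolding P_def using mN by simp
    qed
  next
    case (Suc d)
    show ?case
    proof (intro allI impI)
      fix m assume m: "jJ N a c \<le> m \<and> m = N - Suc d"
      hence m1: "1 \<le> m" "m < N" using jp by auto
      have "Suc m = N - d" using m m1 by simp
      hence Pm1: "P (Suc m)" using Suc.IH m m1 by auto
      have sumsplit: "(\<Sum>k=m..N. a k * exp (- 2 * t * r k)) = a m * exp (- 2 * t * r m) + (\<Sum>k=Suc m..N. a k * exp (- 2 * t * r k))"
        using m1 by (subst sum.atLeast_Suc_atMost) auto
      have AAm: "AA a m = AA a (m - 1) + a m" using AA_Suc[of a "m - 1"] m1 by simp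
      define em where "em = exp (- 2 * t * r m)"
      define em1 where "em1 = exp (- 2 * t * r (Suc m))"
      have rle: "r m \<le> r (Suc m)" using g m1 unfolding good_def by auto
      have tpos: "t > 0" using t Tp unfolding T_def by simp
      have "t * r m \<le> t * r (Suc m)" using rle tpos by (simp add: mult_left_mono)
      hence diff: "em - em1 \<ge> 0" unfolding em_def em1_def by simp
      have A1: "AA a m * (em - em1) \<le> exp (2 * T * r m) * (em - em1)"
        using Ab[of m] m m1 diff by (intro mult_right_mono) auto
      have A2: "exp (2 * T * r m) * (em - em1) \<le> t / s * (exp (- 2 * s * r m) - exp (- 2 * s * r (Suc m)))"
      proof -
        have "s \<le> t" using Tp unfolding s_def by simp
        moreover have "r m \<le> r (Suc m)" using g m1 unfolding good_def by auto
        ultimately have "exp (2 * (t - s) * r m) * (exp (- 2 * t * r m) - exp (- 2 * t * r (Suc m)))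
            \<le> t / s * (exp (- 2 * s * r m) - exp (- 2 * s * r (Suc m)))"
          using key_exp[OF sp] by blast
        moreover have "t - s = T" unfolding s_def by simp
        ultimately show ?thesis unfolding em_def em1_def by simp
      qed
      have "(\<Sum>k=m..N. a k * exp (- 2 * t * r k)) + AA a (m - 1) * exp (- 2 * t * r m)
          = AA a m * (em - em1) + ((\<Sum>k=Suc m..N. a k * exp (- 2 * t * r k)) + AA a (Suc m - 1) * em1)"
        unfolding sumsplit em_def em1_def by (simp add: AAm algebra_simps)
      also have "\<dots> \<le> t / s * (exp (- 2 * s * r m) - exp (- 2 * s * r (Suc m))) + t / s * exp (- 2 * s * r (Suc m))"
        using A1 A2 Pm1 unfolding P_def em1_def by linarith
      also have "\<dots> = t / s * exp (- 2 * s * r m)" by (simp add: algebra_simps)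
      finally show "P m" unfolding P_def .
    qed
  qed
  note all = this
  have Pall: "P m" if "jJ N a c \<le> m" "m \<le> N" for m
  proof -
    have "N - (N - m) = m" using that by simp
    thus ?thesis using all[of "N - m"] that by auto
  qed
  show "jJ N a c \<le> m \<Longrightarrow> m \<le> N \<Longrightarrow> ?thesis"
    using Pall unfolding P_def s_def T_def by blast
qed

lemma FF_upper:
  assumes g: "good N a r" and jd: "jdef N a c" and c: "c > 0" and t: "t > tT N a r c"
  shows "FF N a r t \<le> c + t / (t - tT N a r c) * exp (- 2 * (t - tT N a r c) * r (jJ N a c))"
proof -
  note jp = jJ_props[OF jd]
  have Tp: "tT N a r c > 0" using tT_props(3)[OF g jd c] .
  have "FF N a r t = (\<Sum>k=1..jJ N a c - 1. a k * exp (- 2 * t * r k)) + (\<Sum>k=jJ N a c..N. a k * exp (- 2 * t * r k))"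
    unfolding FF_def using jp by (intro sum_split_at) auto
  also have "(\<Sum>k=1..jJ N a c - 1. a k * exp (- 2 * t * r k)) \<le> AA a (jJ N a c - 1)"
    unfolding AA_def
  proof (intro sum_mono)
    fix k assume k: "k \<in> {1..jJ N a c - 1}"
    hence "a k \<ge> 0" "r k > 0" using g jp unfolding good_def by auto
    moreover have "exp (- 2 * t * r k) \<le> 1" using calculation t Tp by simp
    ultimately show "a k * exp (- 2 * t * r k) \<le> a k" by (simp add: mult_left_le)
  qed
  also have "AA a (jJ N a c - 1) \<le> c" using AA_prev[OF jd] c by simp
  also have "(\<Sum>k=jJ N a c..N. a k * exp (- 2 * t * r k)) \<le> t / (t - tT N a r c) * exp (- 2 * (t - tT N a r c) * r (jJ N a c))"
  proof -
    have "AA a (jJ N a c - 1) * exp (- 2 * t * r (jJ N a c)) \<ge> 0"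
      using AA_nonneg[OF g, of "jJ N a c - 1"] jp by simp
    thus ?thesis using tail_bound[OF g jd c t order_refl jp(2)] by linarith
  qed
  finally show ?thesis by simp
qed


lemma jdef_mono: "jdef N a c \<Longrightarrow> c' \<le> c \<Longrightarrow> jdef N a c'"
  unfolding jdef_def by force

lemma jJ_mono:
  assumes "jdef N a c" "c' \<le> c"
  shows "jJ N a c' \<le> jJ N a c"
proof -
  note jp = jJ_props[OF assms(1)]
  show ?thesis unfolding jJ_def[of N a c'] using jp assms(2) by (intro Least_le) auto
qed

lemma sum_split_at2:
  fixes f :: "nat \<Rightarrow> real"
  assumes "1 \<le> l" "l \<le> m" "m \<le> Suc N"
  shows "(\<Sum>k=l..N. f k) = (\<Sum>k=l..m-1. f k) + (\<Sum>k=m..N. f k)"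
proof -
  have "{l..N} = {l..m-1} \<union> {m..N}" using assms by auto
  moreover have "{l..m-1} \<inter> {m..N} = {}" using assms by auto
  ultimately show ?thesis by (simp add: sum.union_disjoint)
qed

lemma FF_upper3:
  assumes g: "good N a r" and jd: "jdef N a c" and c': "0 < c'" "c' \<le> c" and t: "t > tT N a r c"
  shows "FF N a r t \<le> c' + c * exp (- 2 * t * r (jJ N a c')) + t / (t - tT N a r c) * exp (- 2 * (t - tT N a r c) * r (jJ N a c))"
proof -
  have c: "c > 0" using c' by simp
  have jd': "jdef N a c'" using jdef_mono[OF jd c'(2)] .
  note jp = jJ_props[OF jd] and jp' = jJ_props[OF jd']
  define j1 where "j1 = jJ N a c'"
  define j2 where "j2 = jJ N a c"
  have j12: "j1 \<le> j2" unfolding j1_def j2_def using jJ_mono[OF jd c'(2)] .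
  have Tp: "tT N a r c > 0" using tT_props(3)[OF g jd c] .
  have tp: "t > 0" using t Tp by simp
  define f where "f k = a k * exp (- 2 * t * r k)" for k
  have "FF N a r t = (\<Sum>k=1..j1-1. f k) + (\<Sum>k=j1..N. f k)"
    unfolding FF_def f_def j1_def using jp' by (intro sum_split_at) auto
  also have "(\<Sum>k=j1..N. f k) = (\<Sum>k=j1..j2-1. f k) + (\<Sum>k=j2..N. f k)"
    using jp jp' j12 unfolding j1_def j2_def by (intro sum_split_at2) auto
  finally have split: "FF N a r t = (\<Sum>k=1..j1-1. f k) + (\<Sum>k=j1..j2-1. f k) + (\<Sum>k=j2..N. f k)" by simp
  have p1: "(\<Sum>k=1..j1-1. f k) \<le> c'"
  proof -
    have "(\<Sum>k=1..j1-1. f k) \<le> AA a (j1 - 1)"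
      unfolding AA_def f_def
    proof (intro sum_mono)
      fix k assume k: "k \<in> {1..j1 - 1}"
      hence "a k \<ge> 0" "r k > 0" using g jp' unfolding good_def j1_def by auto
      moreover have "exp (- 2 * t * r k) \<le> 1" using calculation tp by simp
      ultimately show "a k * exp (- 2 * t * r k) \<le> a k" by (simp add: mult_left_le)
    qed
    also have "\<dots> \<le> c'" using AA_prev[OF jd'] c' unfolding j1_def by simp
    finally show ?thesis .
  qed
  have p2: "(\<Sum>k=j1..j2-1. f k) \<le> c * exp (- 2 * t * r j1)"
  proof -
    have "(\<Sum>k=j1..j2-1. f k) \<le> (\<Sum>k=j1..j2-1. a k * exp (- 2 * t * r j1))"
      unfolding f_def
    proof (intro sum_mono)
      fix k assume k: "k \<in> {j1..j2 - 1}"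
      hence "a k \<ge> 0" "r j1 \<le> r k" using g jp jp' unfolding good_def j1_def j2_def by auto
      thus "a k * exp (- 2 * t * r k) \<le> a k * exp (- 2 * t * r j1)"
        using tp by (intro mult_left_mono) (auto simp: mult_left_mono)
    qed
    also have "\<dots> = exp (- 2 * t * r j1) * (\<Sum>k=j1..j2-1. a k)" by (simp add: sum_distrib_right mult_ac)
    also have "(\<Sum>k=j1..j2-1. a k) \<le> AA a (j2 - 1)"
      unfolding AA_def using g jp jp' unfolding good_def j1_def j2_def by (intro sum_mono2) auto
    also have "AA a (j2 - 1) \<le> c" using AA_prev[OF jd] c unfolding j2_def by simp
    finally show ?thesis by (simp add: mult_left_mono mult.commute)
  qed
  have p3: "(\<Sum>k=j2..N. f k) \<le> t / (t - tT N a r c) * exp (- 2 * (t - tT N a r c) * r j2)"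
  proof -
    have "AA a (j2 - 1) * exp (- 2 * t * r j2) \<ge> 0"
      using AA_nonneg[OF g, of "j2 - 1"] jp unfolding j2_def by simp
    thus ?thesis using tail_bound[OF g jd c t order_refl jp(2)] unfolding f_def j2_def by linarith
  qed
  show ?thesis using split p1 p2 p3 unfolding j1_def j2_def by linarith
qed

locale cs =
  fixes N :: "nat \<Rightarrow> nat" and a r :: "nat \<Rightarrow> nat \<Rightarrow> real" and d :: "nat \<Rightarrow> real \<Rightarrow> real"
  assumes G: "\<And>n. good (N n) (a n) (r n)"
    and dnn: "\<And>n t. d n t \<ge> 0"
    and dlo: "\<And>n t. FF (N n) (a n) (r n) t \<le> (d n t)\<^sup>2"
    and dhi: "\<And>n t. (d n t)\<^sup>2 \<le> exp (FF (N n) (a n) (r n) t) - 1"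
begin

abbreviation F where "F n t \<equiv> FF (N n) (a n) (r n) t"
abbreviation T where "T n c \<equiv> tT (N n) (a n) (r n) c"
abbreviation R where "R n c \<equiv> r n (jJ (N n) (a n) c)"
abbreviation JD where "JD n c \<equiv> jdef (N n) (a n) c"

definition H where
  "H \<longleftrightarrow> (\<forall>c>0. eventually (\<lambda>n. JD n c) sequentially \<and> filterlim (\<lambda>n. T n c * R n c) at_top sequentially)"

lemma Rpos: "JD n c \<Longrightarrow> R n c > 0"
  using jJ_props[of "N n" "a n" c] G[of n] unfolding good_def by auto

lemma ratio:
  assumes H: H and c: "c > 0" and c': "c' > 0" and b: "0 < b" "b < 1"
  shows "eventually (\<lambda>n. (1 - b) * T n c' < (1 + b) * T n c) sequentially"
proof -
  define B where "B = c + (1 + b) / b"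
  have "(1 + b) / b > 0" using b by (intro divide_pos_pos) auto
  hence Bp: "B > 0" unfolding B_def using c by linarith
  have e1: "eventually (\<lambda>n. JD n c') sequentially" and l1: "filterlim (\<lambda>n. T n c' * R n c') at_top sequentially"
    using H c' unfolding H_def by auto
  have e2: "eventually (\<lambda>n. JD n c) sequentially" using H c unfolding H_def by auto
  have e3: "eventually (\<lambda>n. ln (B + 1) / (2 * b) < T n c' * R n c') sequentially"
    using l1 unfolding filterlim_at_top_dense by blast
  show ?thesis
  proof (rule eventually_mono[OF eventually_conj[OF e1 eventually_conj[OF e2 e3]]])
    fix n assume nn: "JD n c' \<and> JD n c \<and> ln (B + 1) / (2 * b) < T n c' * R n c'"
    hence jd': "JD n c'" and jd: "JD n c" and big: "ln (B + 1) / (2 * b) < T n c' * R n c'" by auto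
    have T'p: "T n c' > 0" using tT_props(3)[OF G jd' c'] .
    have Tp: "T n c > 0" using tT_props(3)[OF G jd c] .
    have Rp: "R n c > 0" using Rpos[OF jd] .
    have low: "exp (2 * (T n c' - (1 - b) * T n c') * R n c') - 1 \<le> F n ((1 - b) * T n c')"
      using FF_lower[OF G jd' c', of "(1 - b) * T n c'"] T'p b by simp
    have "ln (B + 1) < 2 * b * (T n c' * R n c')" using big b by (simp add: field_simps)
    hence "exp (ln (B + 1)) < exp (2 * b * (T n c' * R n c'))" by simp
    hence "B + 1 < exp (2 * (T n c' - (1 - b) * T n c') * R n c')" using Bp by (simp add: algebra_simps)
    hence Fbig: "F n ((1 - b) * T n c') > B" using low by simp
    show "(1 - b) * T n c' < (1 + b) * T n c"
    proof (rule ccontr)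
      assume "\<not> (1 - b) * T n c' < (1 + b) * T n c"
      hence le: "(1 + b) * T n c \<le> (1 - b) * T n c'" by simp
      have "F n ((1 - b) * T n c') \<le> F n ((1 + b) * T n c)" using FF_antimono[OF G le] .
      also have "\<dots> \<le> c + (1 + b) * T n c / ((1 + b) * T n c - T n c) * exp (- 2 * ((1 + b) * T n c - T n c) * R n c)"
        using FF_upper[OF G jd c, of "(1 + b) * T n c"] Tp b by simp
      also have "(1 + b) * T n c / ((1 + b) * T n c - T n c) = (1 + b) / b" using Tp b by (simp add: field_simps)
      also have "- 2 * ((1 + b) * T n c - T n c) * R n c \<le> 0"
        using Tp b Rp by (simp add: algebra_simps mult_nonneg_nonneg)
      hence "exp (- 2 * ((1 + b) * T n c - T n c) * R n c) \<le> 1" by simp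
      hence "(1 + b) / b * exp (- 2 * ((1 + b) * T n c - T n c) * R n c) \<le> (1 + b) / b"
        using b by (intro mult_left_le) auto
      hence "c + (1 + b) / b * exp (- 2 * ((1 + b) * T n c - T n c) * R n c) \<le> B"
        unfolding B_def by linarith
      finally show False using Fbig by simp
    qed
  qed
qed

end


context cs begin

lemma F_small:
  assumes H: H and c: "c > 0" and al: "0 < al" "al < 1" and e: "e > 0"
  shows "eventually (\<lambda>n. F n ((1 + al) * T n c) < e) sequentially"
proof -
  define c' where "c' = min c (e / 2)"
  have c': "0 < c'" "c' \<le> c" "c' \<le> e / 2" unfolding c'_def using c e by auto
  define b where "b = al / 5"
  have b: "0 < b" "b < 1" unfolding b_def using al by auto
  define K where "K = (1 + al / 3) / (al / 3)"
  have Kp: "K > 0" unfolding K_def using al by simp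
  define M where "M = ln (2 * K / e) * 3 / (2 * al)"
  have eA: "eventually (\<lambda>n. (1 - b) * T n c' < (1 + b) * T n c) sequentially"
    by (rule ratio[OF H c c'(1) b])
  have eB: "eventually (\<lambda>n. JD n c') sequentially" and lB: "filterlim (\<lambda>n. T n c' * R n c') at_top sequentially"
    using H c' unfolding H_def by auto
  have eB2: "eventually (\<lambda>n. M < T n c' * R n c') sequentially"
    using lB unfolding filterlim_at_top_dense by blast
  have eC: "eventually (\<lambda>n. JD n c) sequentially" using H c unfolding H_def by auto
  show ?thesis
  proof (rule eventually_mono[OF eventually_conj[OF eA eventually_conj[OF eB eventually_conj[OF eB2 eC]]]])
    fix n assume nn: "(1 - b) * T n c' < (1 + b) * T n c \<and> JD n c' \<and> M < T n c' * R n c' \<and> JD n c"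
    hence rat: "(1 - b) * T n c' < (1 + b) * T n c" and jd': "JD n c'" and big: "M < T n c' * R n c'" and jd: "JD n c"
      by auto
    have T'p: "T n c' > 0" using tT_props(3)[OF G jd' c'(1)] .
    have Tp: "T n c > 0" using tT_props(3)[OF G jd c] .
    have h2: "(1 + al / 3) * (1 + b) \<le> (1 + al) * (1 - b)"
    proof -
      have "(1 + al) * (1 - b) - (1 + al / 3) * (1 + b) = 4 / 15 * al * (1 - al)" unfolding b_def by (simp add: algebra_simps)
      moreover have "4 / 15 * al * (1 - al) \<ge> 0" using al by simp
      ultimately show ?thesis by linarith
    qed
    have h1: "(1 + al / 3) * ((1 - b) * T n c') < (1 + al / 3) * ((1 + b) * T n c)"
      using rat al by (intro mult_strict_left_mono) auto
    have h3: "(1 + al / 3) * ((1 + b) * T n c) \<le> (1 + al) * (1 - b) * T n c"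
      using mult_right_mono[OF h2, of "T n c"] Tp by (simp add: mult_ac)
    have "(1 - b) * ((1 + al / 3) * T n c') < (1 - b) * ((1 + al) * T n c)"
      using h1 h3 by (simp add: mult_ac)
    hence tle: "(1 + al / 3) * T n c' \<le> (1 + al) * T n c" using b by simp
    have "F n ((1 + al) * T n c) \<le> F n ((1 + al / 3) * T n c')" using FF_antimono[OF G tle] .
    also have "\<dots> \<le> c' + (1 + al / 3) * T n c' / ((1 + al / 3) * T n c' - T n c') *
        exp (- 2 * ((1 + al / 3) * T n c' - T n c') * R n c')"
      using FF_upper[OF G jd' c'(1), of "(1 + al / 3) * T n c'"] T'p al by simp
    also have "(1 + al / 3) * T n c' / ((1 + al / 3) * T n c' - T n c') = K"
      unfolding K_def using T'p al by (simp add: field_simps)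
    finally have up: "F n ((1 + al) * T n c) \<le> c' + K * exp (- 2 * ((1 + al / 3) * T n c' - T n c') * R n c')" .
    have ex: "exp (- 2 * ((1 + al / 3) * T n c' - T n c') * R n c') < e / (2 * K)"
    proof -
      have "- 2 * ((1 + al / 3) * T n c' - T n c') * R n c' = - (2 * al / 3) * (T n c' * R n c')"
        by (simp add: algebra_simps)
      also have "\<dots> < - (2 * al / 3) * M" using big al by simp
      also have "- (2 * al / 3) * M = - ln (2 * K / e)" unfolding M_def using al by simp
      finally have "exp (- 2 * ((1 + al / 3) * T n c' - T n c') * R n c') < exp (- ln (2 * K / e))" by simp
      also have "\<dots> = e / (2 * K)" using Kp e by (simp add: exp_minus)
      finally show ?thesis .
    qed
    have "K * exp (- 2 * ((1 + al / 3) * T n c' - T n c') * R n c') < K * (e / (2 * K))"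
      by (rule mult_strict_left_mono[OF ex Kp])
    also have "K * (e / (2 * K)) = e / 2" using Kp by simp
    finally have "K * exp (- 2 * ((1 + al / 3) * T n c' - T n c') * R n c') < e / 2" .
    thus "F n ((1 + al) * T n c) < e" using up c' by linarith
  qed
qed

lemma d_small_of_F:
  assumes "eventually (\<lambda>n. F n (s n) < ln (1 + e\<^sup>2)) sequentially" and e: "e > 0"
  shows "eventually (\<lambda>n. d n (s n) < e) sequentially"
proof (rule eventually_mono[OF assms(1)])
  fix n assume "F n (s n) < ln (1 + e\<^sup>2)"
  hence "exp (F n (s n)) < 1 + e\<^sup>2" by (metis add_pos_nonneg exp_less_cancel_iff exp_ln zero_le_power2 zero_less_one)
  hence "(d n (s n))\<^sup>2 < e\<^sup>2" using dhi[of n "s n"] by simp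
  thus "d n (s n) < e" using e by (simp add: power_less_imp_less_base)
qed

lemma H_to_cut:
  assumes H: H and c: "c > 0"
  shows "L2_cutoff_time d (\<lambda>n. T n c)"
  unfolding L2_cutoff_time_def
proof (intro conjI allI impI)
  have eJ: "eventually (\<lambda>n. JD n c) sequentially" and lT: "filterlim (\<lambda>n. T n c * R n c) at_top sequentially"
    using H c unfolding H_def by auto
  show "eventually (\<lambda>n. T n c > 0) sequentially"
    using eJ by (rule eventually_mono) (use tT_props(3)[OF G _ c] in auto)
  fix al :: real assume al: "0 < al \<and> al < 1"
  show "(\<lambda>n. d n ((1 + al) * T n c)) \<longlonglongrightarrow> 0"
  proof (rule order_tendstoI)
    fix y :: real assume "y < 0"
    thus "eventually (\<lambda>n. y < d n ((1 + al) * T n c)) sequentially"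
      using dnn by (intro always_eventually) (auto intro: less_le_trans)
  next
    fix e :: real assume e: "0 < e"
    have "ln (1 + e\<^sup>2) > 0" using e by (intro ln_gt_zero) simp
    thus "eventually (\<lambda>n. d n ((1 + al) * T n c) < e) sequentially"
      using d_small_of_F[OF F_small[OF H c _ _ \<open>ln (1 + e\<^sup>2) > 0\<close>] e] al by auto
  qed
  show "filterlim (\<lambda>n. d n ((1 - al) * T n c)) at_top sequentially"
    unfolding filterlim_at_top
  proof
    fix Z :: real
    define Z' where "Z' = max Z 0"
    have eb: "eventually (\<lambda>n. ln (Z'\<^sup>2 + 1) / (2 * al) < T n c * R n c) sequentially"
      using lT unfolding filterlim_at_top_dense by blast
    show "eventually (\<lambda>n. Z \<le> d n ((1 - al) * T n c)) sequentially"
    proof (rule eventually_mono[OF eventually_conj[OF eJ eb]])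
      fix n assume nn: "JD n c \<and> ln (Z'\<^sup>2 + 1) / (2 * al) < T n c * R n c"
      hence jd: "JD n c" and big: "ln (Z'\<^sup>2 + 1) / (2 * al) < T n c * R n c" by auto
      have Tp: "T n c > 0" using tT_props(3)[OF G jd c] .
      have low: "exp (2 * (T n c - (1 - al) * T n c) * R n c) - 1 \<le> F n ((1 - al) * T n c)"
        using FF_lower[OF G jd c, of "(1 - al) * T n c"] Tp al by simp
      have "ln (Z'\<^sup>2 + 1) < 2 * (T n c - (1 - al) * T n c) * R n c"
        using big al by (simp add: field_simps)
      hence "exp (ln (Z'\<^sup>2 + 1)) < exp (2 * (T n c - (1 - al) * T n c) * R n c)" by simp
      hence "Z'\<^sup>2 + 1 < exp (2 * (T n c - (1 - al) * T n c) * R n c)"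
        by (metis add_pos_nonneg exp_ln zero_le_power2 zero_less_one add.commute)
      hence "Z'\<^sup>2 < (d n ((1 - al) * T n c))\<^sup>2" using low dlo[of n "(1 - al) * T n c"] by simp
      hence "Z' < d n ((1 - al) * T n c)" using dnn by (simp add: power_less_imp_less_base)
      thus "Z \<le> d n ((1 - al) * T n c)" unfolding Z'_def by simp
    qed
  qed
qed

end


lemma FF_zero: "FF N a r 0 = AA a N"
  unfolding FF_def AA_def by simp

context cs begin

lemma cut_to_H:
  assumes cut: "L2_cutoff_time d t0"
  shows H
  unfolding H_def
proof (intro allI impI conjI)
  fix c :: real assume c: "c > 0"
  have h0: "eventually (\<lambda>n. t0 n > 0) sequentially" using cut unfolding L2_cutoff_time_def by blast
  have hup: "(\<lambda>n. d n ((1 + 1/2) * t0 n)) \<longlonglongrightarrow> 0"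
    and hdn: "filterlim (\<lambda>n. d n ((1 - 1/2) * t0 n)) at_top sequentially"
    using cut unfolding L2_cutoff_time_def by (auto dest: spec[of _ "1/2"])
  have Fup: "eventually (\<lambda>n. F n ((1 + 1/2) * t0 n) < x) sequentially" if x: "x > 0" for x
  proof -
    have "eventually (\<lambda>n. d n ((1 + 1/2) * t0 n) < sqrt x) sequentially"
      using order_tendstoD(2)[OF hup] x by simp
    thus ?thesis
    proof (rule eventually_mono)
      fix n assume "d n ((1 + 1/2) * t0 n) < sqrt x"
      hence "(d n ((1 + 1/2) * t0 n))\<^sup>2 < (sqrt x)\<^sup>2"
        using dnn by (intro power_strict_mono) auto
      thus "F n ((1 + 1/2) * t0 n) < x" using dlo[of n] x by (smt (verit) real_sqrt_pow2)
    qed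
  qed
  have Fdn: "eventually (\<lambda>n. F n ((1 - 1/2) * t0 n) > Z) sequentially" for Z
  proof -
    define Z' where "Z' = max Z 0"
    have "eventually (\<lambda>n. sqrt (exp Z') \<le> d n ((1 - 1/2) * t0 n)) sequentially"
      using hdn unfolding filterlim_at_top by blast
    thus ?thesis
    proof (rule eventually_mono)
      fix n assume h: "sqrt (exp Z') \<le> d n ((1 - 1/2) * t0 n)"
      hence "(sqrt (exp Z'))\<^sup>2 \<le> (d n ((1 - 1/2) * t0 n))\<^sup>2" by (intro power_mono) auto
      hence "exp Z' \<le> exp (F n ((1 - 1/2) * t0 n)) - 1" using dhi[of n "(1 - 1/2) * t0 n"] by simp
      hence "exp Z' < exp (F n ((1 - 1/2) * t0 n))" by linarith
      hence "Z' < F n ((1 - 1/2) * t0 n)" by simp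
      thus "F n ((1 - 1/2) * t0 n) > Z" unfolding Z'_def by simp
    qed
  qed
  have JDev: "eventually (\<lambda>n. JD n c) sequentially"
  proof (rule eventually_mono[OF eventually_conj[OF h0 Fdn[of c]]])
    fix n assume nn: "t0 n > 0 \<and> F n ((1 - 1/2) * t0 n) > c"
    have "F n ((1 - 1/2) * t0 n) \<le> F n 0" using nn by (intro FF_antimono[OF G]) simp
    hence A: "AA (a n) (N n) > c" using nn by (simp add: FF_zero)
    have "N n \<noteq> 0"
    proof
      assume "N n = 0" thus False using A c by (simp add: AA_def)
    qed
    thus "JD n c" unfolding jdef_def using A by (intro exI[of _ "N n"]) auto
  qed
  show "eventually (\<lambda>n. JD n c) sequentially" by (rule JDev)
  have tR: "eventually (\<lambda>n. K < t0 n * R n c) sequentially" for K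
  proof -
    have "c * exp (- 3 * K) > 0" using c by simp
    from Fup[OF this] show ?thesis
    proof (rule eventually_mono[OF eventually_conj[OF eventually_conj[OF JDev h0]]])
      fix n assume nn: "(JD n c \<and> t0 n > 0) \<and> F n ((1 + 1/2) * t0 n) < c * exp (- 3 * K)"
      hence "c * exp (- 2 * ((1 + 1/2) * t0 n) * R n c) \<le> F n ((1 + 1/2) * t0 n)"
        by (intro FF_lower_c[OF G]) auto
      hence "c * exp (- 2 * ((1 + 1/2) * t0 n) * R n c) < c * exp (- 3 * K)" using nn by simp
      hence "exp (- 2 * ((1 + 1/2) * t0 n) * R n c) < exp (- 3 * K)" using c by simp
      hence "- 2 * ((1 + 1/2) * t0 n) * R n c < - 3 * K" by simp
      thus "K < t0 n * R n c" by simp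
    qed
  qed
  show "filterlim (\<lambda>n. T n c * R n c) at_top sequentially"
    unfolding filterlim_at_top_dense
  proof
    fix Z :: real
    define K where "K = max Z 1"
    show "eventually (\<lambda>n. Z < T n c * R n c) sequentially"
    proof (rule eventually_mono[OF eventually_conj[OF eventually_conj[OF JDev h0] eventually_conj[OF tR[of "4 * K"] Fdn[of "c + 2"]]]])
      fix n assume nn: "(JD n c \<and> t0 n > 0) \<and> 4 * K < t0 n * R n c \<and> F n ((1 - 1/2) * t0 n) > c + 2"
      hence jd: "JD n c" and tp: "t0 n > 0" and tr: "4 * K < t0 n * R n c" and Fb: "F n ((1 - 1/2) * t0 n) > c + 2"
        by auto
      have Rp: "R n c > 0" using Rpos[OF jd] .
      have Tp: "T n c > 0" using tT_props(3)[OF G jd c] .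
      show "Z < T n c * R n c"
      proof (rule ccontr)
        assume "\<not> Z < T n c * R n c"
        hence "T n c * R n c \<le> K" unfolding K_def by simp
        hence "4 * (T n c * R n c) < t0 n * R n c" using tr by simp
        hence T4: "4 * T n c < t0 n" using Rp by (simp add: mult_ac)
        define t where "t = (1 - 1/2) * t0 n"
        have tT: "t > T n c" unfolding t_def using T4 Tp by simp
        have q: "t / (t - T n c) \<le> 2" using T4 Tp unfolding t_def by (simp add: field_simps)
        have "- 2 * (t - T n c) * R n c \<le> 0" using tT Rp by (intro mult_nonpos_nonneg) auto
        hence ex: "exp (- 2 * (t - T n c) * R n c) \<le> 1" by simp
        have "t / (t - T n c) * exp (- 2 * (t - T n c) * R n c) \<le> 2 * 1"
          using q ex tT by (intro mult_mono) auto
        hence "F n t \<le> c + 2" using FF_upper[OF G jd c tT] by linarith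
        thus False using Fb unfolding t_def by simp
      qed
    qed
  qed
qed

end


lemma exp2_bound:
  fixes x :: real assumes x: "x > 0"
  shows "(1 + x) * exp (- 2 * x) < 1 / x"
proof -
  have e: "exp x \<ge> 1 + x" by simp
  have "(1 + x)\<^sup>2 \<le> (exp x)\<^sup>2" using e x by (intro power_mono) auto
  also have "(exp x)\<^sup>2 = exp (2 * x)" by (simp add: power2_eq_square exp_add[symmetric])
  finally have h: "(1 + x)\<^sup>2 \<le> exp (2 * x)" .
  have "(1 + x) * exp (- 2 * x) = (1 + x) / exp (2 * x)" by (simp add: exp_minus divide_inverse)
  also have "\<dots> \<le> (1 + x) / (1 + x)\<^sup>2" using h x by (intro divide_left_mono) auto
  also have "\<dots> = 1 / (1 + x)" using x by (simp add: power2_eq_square)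
  also have "\<dots> < 1 / x" using x by (simp add: divide_strict_left_mono)
  finally show ?thesis .
qed

context cs begin

lemma Obound:
  assumes H: H and eps: "\<epsilon> > 0" and c: "c > 0"
  shows "\<exists>C. eventually (\<lambda>n. \<bar>Inf {t. t \<ge> 0 \<and> d n t \<le> \<epsilon>} - T n c\<bar> \<le> C * sqrt (T n c / R n c)) sequentially"
proof -
  define \<eta> where "\<eta> = ln (1 + \<epsilon>\<^sup>2)"
  have etap: "\<eta> > 0" unfolding \<eta>_def using eps by (intro ln_gt_zero) simp
  have expeta: "exp \<eta> = 1 + \<epsilon>\<^sup>2" unfolding \<eta>_def by (simp add: add_pos_nonneg)
  define c' where "c' = min c (\<eta> / 3)"
  have c': "0 < c'" "c' \<le> c" "c' \<le> \<eta> / 3" unfolding c'_def using c etap by auto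
  define K' where "K' = \<eta> / 2"
  define m where "m = ln (3 * c / \<eta>) / 2"
  define M where "M = max 1 ((3 / \<eta>)\<^sup>2)"
  have E1: "eventually (\<lambda>n. JD n c) sequentially" and L1: "filterlim (\<lambda>n. T n c * R n c) at_top sequentially"
    using H c unfolding H_def by auto
  have E2: "eventually (\<lambda>n. JD n c') sequentially" and L2: "filterlim (\<lambda>n. T n c' * R n c') at_top sequentially"
    using H c' unfolding H_def by auto
  have E3: "eventually (\<lambda>n. M < T n c * R n c) sequentially" using L1 unfolding filterlim_at_top_dense by blast
  have E4: "eventually (\<lambda>n. (1 - 1/3) * T n c' < (1 + 1/3) * T n c) sequentially"
    by (rule ratio[OF H c c'(1)]) auto
  have E5: "eventually (\<lambda>n. 2 * m < T n c' * R n c') sequentially" using L2 unfolding filterlim_at_top_dense by blast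
  show ?thesis
  proof (intro exI[of _ "1 + K'"], rule eventually_mono[OF eventually_conj[OF E1 eventually_conj[OF E2 eventually_conj[OF E3 eventually_conj[OF E4 E5]]]]])
    fix n assume nn: "JD n c \<and> JD n c' \<and> M < T n c * R n c \<and> (1 - 1/3) * T n c' < (1 + 1/3) * T n c \<and> 2 * m < T n c' * R n c'"
    hence jd: "JD n c" and jd': "JD n c'" and TRb: "M < T n c * R n c" and rat: "(1 - 1/3) * T n c' < (1 + 1/3) * T n c"
      and T'R': "2 * m < T n c' * R n c'" by auto
    define TT where "TT = T n c"
    define RR where "RR = R n c"
    have Tp: "TT > 0" unfolding TT_def using tT_props(3)[OF G jd c] .
    have Rp: "RR > 0" unfolding RR_def using Rpos[OF jd] .
    have T'p: "T n c' > 0" using tT_props(3)[OF G jd' c'(1)] .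
    have R'p: "R n c' > 0" using Rpos[OF jd'] .
    have TR1: "TT * RR > 1" and TR2: "TT * RR > (3 / \<eta>)\<^sup>2" using TRb unfolding M_def TT_def RR_def by auto
    define w where "w = sqrt (TT / RR)"
    define x where "x = sqrt (TT * RR)"
    have wp: "w > 0" unfolding w_def using Tp Rp by simp
    have xp: "x > 0" unfolding x_def using Tp Rp by simp
    have w2: "w\<^sup>2 = TT / RR" unfolding w_def using Tp Rp by simp
    have wR: "w * RR = x" unfolding x_def
    proof (rule real_sqrt_unique[symmetric])
      show "(w * RR)\<^sup>2 = TT * RR" unfolding power_mult_distrib w2 using Tp Rp by (simp add: power2_eq_square)
      show "0 \<le> w * RR" using wp Rp by simp
    qed
    have Tw: "TT / w = x" unfolding x_def
    proof (rule real_sqrt_unique[symmetric])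
      show "(TT / w)\<^sup>2 = TT * RR" unfolding power_divide w2 using Tp Rp by (simp add: power2_eq_square)
      show "0 \<le> TT / w" using wp Tp by simp
    qed
    have xb: "x > 3 / \<eta>"
    proof -
      have "(3 / \<eta>)\<^sup>2 < x\<^sup>2" unfolding x_def using TR2 Tp Rp by simp
      thus ?thesis by (rule power_less_imp_less_base[OF _ less_imp_le[OF xp]])
    qed
    have Rw: "1 / RR \<le> w"
    proof -
      have "1 / RR \<le> TT" using TR1 Rp by (simp add: divide_le_eq mult.commute)
      hence "(1 / RR) / RR \<le> TT / RR" using Rp by (intro divide_right_mono) auto
      moreover have "(1 / RR)\<^sup>2 = (1 / RR) / RR" by (simp add: power2_eq_square)
      ultimately have "(1 / RR)\<^sup>2 \<le> w\<^sup>2" unfolding w2 by simp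
      thus ?thesis by (rule power2_le_imp_le[OF _ less_imp_le[OF wp]])
    qed
    define t where "t = TT + w"
    have tT: "t > T n c" unfolding t_def TT_def using wp by simp
    have up3: "F n t \<le> c' + c * exp (- 2 * t * R n c') + t / (t - T n c) * exp (- 2 * (t - T n c) * R n c)"
      using FF_upper3[OF G jd c'(1) c'(2) tT] .
    have b2: "c * exp (- 2 * t * R n c') < \<eta> / 3"
    proof -
      have "T n c' < 2 * TT" using rat unfolding TT_def by simp
      hence "T n c' * R n c' < 2 * TT * R n c'" using R'p by simp
      hence "m < TT * R n c'" using T'R' by simp
      moreover have "w * R n c' > 0" using wp R'p by simp
      moreover have "- 2 * t * R n c' = - 2 * (TT * R n c') - 2 * (w * R n c')" unfolding t_def by (simp add: algebra_simps)
      moreover have "- ln (3 * c / \<eta>) = - 2 * m" unfolding m_def by simp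
      ultimately have "- 2 * t * R n c' < - ln (3 * c / \<eta>)" by linarith
      hence "exp (- 2 * t * R n c') < exp (- ln (3 * c / \<eta>))" by simp
      also have "\<dots> = \<eta> / (3 * c)" using c etap by (simp add: exp_minus)
      finally have "c * exp (- 2 * t * R n c') < c * (\<eta> / (3 * c))" by (rule mult_strict_left_mono[OF _ c])
      also have "c * (\<eta> / (3 * c)) = \<eta> / 3" using c by simp
      finally show ?thesis .
    qed
    have b3: "t / (t - T n c) * exp (- 2 * (t - T n c) * R n c) < \<eta> / 3"
    proof -
      have "t / (t - T n c) = 1 + x" unfolding t_def TT_def[symmetric] using wp Tw by (simp add: field_simps)
      moreover have "- 2 * (t - T n c) * R n c = - 2 * x" unfolding t_def TT_def[symmetric] RR_def[symmetric] using wR by simp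
      ultimately have "t / (t - T n c) * exp (- 2 * (t - T n c) * R n c) = (1 + x) * exp (- 2 * x)" by simp
      also have "\<dots> < 1 / x" by (rule exp2_bound[OF xp])
      also have "1 / x < \<eta> / 3" using xb xp etap by (simp add: field_simps)
      finally show ?thesis .
    qed
    have Fsm: "F n t < \<eta>" using up3 b2 b3 c' by linarith
    have dt: "d n t \<le> \<epsilon>"
    proof -
      have "exp (F n t) < exp \<eta>" using Fsm by simp
      hence "(d n t)\<^sup>2 < \<epsilon>\<^sup>2" using dhi[of n t] expeta by simp
      thus ?thesis by (rule less_imp_le[OF power_less_imp_less_base[OF _ less_imp_le[OF eps]]])
    qed
    define Sset where "Sset = {t. t \<ge> 0 \<and> d n t \<le> \<epsilon>}"
    have tS: "t \<in> Sset" unfolding Sset_def using dt Tp wp unfolding t_def by simp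
    have bdd: "bdd_below Sset" unfolding Sset_def by (rule bdd_belowI[of _ 0]) auto
    have upper: "Inf Sset \<le> TT + w" using cInf_lower[OF tS bdd] unfolding t_def .
    have lower: "TT - K' / RR \<le> Inf Sset"
    proof (rule cInf_greatest)
      show "Sset \<noteq> {}" using tS by auto
    next
      fix s assume s: "s \<in> Sset"
      hence s0: "s \<ge> 0" and ds: "d n s \<le> \<epsilon>" unfolding Sset_def by auto
      show "TT - K' / RR \<le> s"
      proof (rule ccontr)
        assume "\<not> TT - K' / RR \<le> s"
        hence "K' / RR < TT - s" by simp
        hence "K' < (TT - s) * RR" using Rp by (simp add: field_simps)
        hence "2 * K' < 2 * ((TT - s) * RR)" by linarith
        hence "exp (2 * K') < exp (2 * ((TT - s) * RR))" by (simp only: exp_less_cancel_iff)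
        hence "1 + \<epsilon>\<^sup>2 < exp (2 * ((T n c - s) * R n c))" unfolding K'_def TT_def RR_def using expeta by simp
        moreover have "exp (2 * ((T n c - s) * R n c)) - 1 \<le> F n s" using FF_lower[OF G jd c s0] by (simp only: mult.assoc)
        ultimately have "\<epsilon>\<^sup>2 < (d n s)\<^sup>2" using dlo[of n s] by simp
        hence "\<epsilon> < d n s" by (rule power_less_imp_less_base[OF _ dnn])
        thus False using ds by simp
      qed
    qed
    have "K' / RR \<le> K' * w" using Rw unfolding K'_def using etap
      by (metis divide_inverse inverse_eq_divide mult_left_mono less_imp_le divide_pos_pos zero_less_numeral)
    moreover have "K' \<ge> 0" unfolding K'_def using etap by simp
    moreover have "K' * w \<ge> 0" using calculation(2) wp by simp
    ultimately have "\<bar>Inf Sset - TT\<bar> \<le> w + K' * w" using upper lower wp unfolding abs_le_iff by linarith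
    hence "\<bar>Inf Sset - TT\<bar> \<le> (1 + K') * w" by (simp add: algebra_simps)
    thus "\<bar>Inf {t. t \<ge> 0 \<and> d n t \<le> \<epsilon>} - T n c\<bar> \<le> (1 + K') * sqrt (T n c / R n c)"
      unfolding Sset_def TT_def w_def RR_def .
  qed
qed

end


lemma prod_bounds:
  fixes x :: "nat \<Rightarrow> real"
  assumes "finite I" "\<forall>i\<in>I. x i \<ge> 0"
  shows "sum x I \<le> (\<Prod>i\<in>I. 1 + x i) - 1" and "(\<Prod>i\<in>I. 1 + x i) - 1 \<le> exp (sum x I) - 1"
proof -
  show "sum x I \<le> (\<Prod>i\<in>I. 1 + x i) - 1"
    using assms
  proof (induction I rule: finite_induct)
    case empty thus ?case by simp
  next
    case (insert a F)
    hence ih: "sum x F \<le> (\<Prod>i\<in>F. 1 + x i) - 1" and xa: "x a \<ge> 0" by auto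
    have "sum x F \<ge> 0" using insert by (intro sum_nonneg) auto
    have "(1 + x a) * (1 + sum x F) \<le> (1 + x a) * (\<Prod>i\<in>F. 1 + x i)"
      using ih xa by (intro mult_left_mono) auto
    moreover have "x a + sum x F \<le> (1 + x a) * (1 + sum x F) - 1"
      using xa \<open>sum x F \<ge> 0\<close> by (simp add: algebra_simps)
    moreover have "(\<Prod>i\<in>insert a F. 1 + x i) = (1 + x a) * (\<Prod>i\<in>F. 1 + x i)" using insert by simp
    moreover have "sum x (insert a F) = x a + sum x F" using insert by simp
    ultimately show ?case by linarith
  qed
  have "(\<Prod>i\<in>I. 1 + x i) \<le> (\<Prod>i\<in>I. exp (x i))"
    using assms by (intro prod_mono) auto
  also have "\<dots> = exp (sum x I)" using assms by (simp add: exp_sum)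
  finally show "(\<Prod>i\<in>I. 1 + x i) - 1 \<le> exp (sum x I) - 1" by simp
qed

theorem theorem4p2:
  fixes ell :: "nat \<Rightarrow> nat"
    and S :: "nat \<Rightarrow> nat \<Rightarrow> 'a set"
    and L :: "nat \<Rightarrow> nat \<Rightarrow> 'a \<Rightarrow> 'a \<Rightarrow> real"
    and \<pi> \<mu> :: "nat \<Rightarrow> nat \<Rightarrow> 'a \<Rightarrow> real"
    and p :: "nat \<Rightarrow> nat \<Rightarrow> real"
    and lam :: "nat \<Rightarrow> nat \<Rightarrow> nat \<Rightarrow> real"
    and phi :: "nat \<Rightarrow> nat \<Rightarrow> nat \<Rightarrow> 'a \<Rightarrow> real"
    and sig :: "nat \<Rightarrow> nat \<Rightarrow> nat \<times> nat"
  assumes chains: "\<And>n i. i < ell n \<Longrightarrow> finite_irred_chain (S n i) (L n i) (\<pi> n i)"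
    and rev: "\<And>n i. i < ell n \<Longrightarrow> reversible (S n i) (L n i) (\<pi> n i)"
    and init: "\<And>n i. i < ell n \<Longrightarrow> is_distribution (S n i) (\<mu> n i)"
    and ppos: "\<And>n i. i < ell n \<Longrightarrow> p n i > 0"
    and psum: "\<And>n. (\<Sum>i<ell n. p n i) \<le> 1"
    and eig: "\<And>n i. i < ell n \<Longrightarrow>
                orthonormal_eigendata (S n i) (L n i) (\<pi> n i) (lam n i) (phi n i)"
    and enum: "\<And>n. sorted_enum (ell n) (S n) (p n) (lam n) (sig n)"
  shows "(has_L2_cutoff (\<lambda>n t. prod_d2 (ell n) (S n) (p n) (L n) (\<pi> n) (\<mu> n) t) \<longleftrightarrow>
           (\<forall>c>0. (\<forall>\<^sub>F n in sequentially. jt_defined (ell n) (S n) (\<mu> n) (phi n) (sig n) c) \<and>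
              filterlim (\<lambda>n. taut (ell n) (S n) (p n) (lam n) (\<mu> n) (phi n) (sig n) c *
                              rho (p n) (lam n) (sig n) (jt (ell n) (S n) (\<mu> n) (phi n) (sig n) c))
                at_top sequentially))
       \<and> (has_L2_cutoff (\<lambda>n t. prod_d2 (ell n) (S n) (p n) (L n) (\<pi> n) (\<mu> n) t) \<longrightarrow>
           (\<forall>c>0. L2_cutoff_time (\<lambda>n t. prod_d2 (ell n) (S n) (p n) (L n) (\<pi> n) (\<mu> n) t)
                    (\<lambda>n. taut (ell n) (S n) (p n) (lam n) (\<mu> n) (phi n) (sig n) c)) \<and>
           (\<forall>\<epsilon>>0. \<forall>c>0. \<exists>C. \<forall>\<^sub>F n in sequentially.
              \<bar>prod_T2 (ell n) (S n) (p n) (L n) (\<pi> n) (\<mu> n) \<epsilon>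
                 - taut (ell n) (S n) (p n) (lam n) (\<mu> n) (phi n) (sig n) c\<bar>
              \<le> C * sqrt (taut (ell n) (S n) (p n) (lam n) (\<mu> n) (phi n) (sig n) c /
                          rho (p n) (lam n) (sig n) (jt (ell n) (S n) (\<mu> n) (phi n) (sig n) c))))"


proof -
  define Nn where "Nn n = num_eig (ell n) (S n)" for n
  define an where "an n k = (psi (S n) (\<mu> n) (phi n) (sig n) k)\<^sup>2" for n k
  define rn where "rn n k = rho (p n) (lam n) (sig n) k" for n k
  define dn where "dn n t = prod_d2 (ell n) (S n) (p n) (L n) (\<pi> n) (\<mu> n) t" for n t
  have bij: "bij_betw (sig n) {1..Nn n} {(i, j). i < ell n \<and> 1 \<le> j \<and> j < card (S n i)}"
    and mono: "\<And>i j. 1 \<le> i \<Longrightarrow> i \<le> j \<Longrightarrow> j \<le> Nn n \<Longrightarrow> rn n i \<le> rn n j" for n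
    using enum[of n] unfolding sorted_enum_def Nn_def rn_def by auto
  have rpos: "rn n k > 0" if k: "1 \<le> k" "k \<le> Nn n" for n k
  proof -
    obtain i j where ij: "sig n k = (i, j)" by fastforce
    have "sig n k \<in> {(i, j). i < ell n \<and> 1 \<le> j \<and> j < card (S n i)}"
      using bij_betw_apply[OF bij[of n]] k by auto
    hence ij2: "i < ell n" "1 \<le> j" "j < card (S n i)" using ij by auto
    have "lam n i j > 0" using eig_pos[OF chains[OF ij2(1)] eig[OF ij2(1)] ij2(2,3)] .
    moreover have "p n i > 0" using ppos[OF ij2(1)] .
    ultimately show ?thesis unfolding rn_def rho_def ij by simp
  qed
  have good: "good (Nn n) (an n) (rn n)" for n
    unfolding good_def using rpos mono unfolding an_def by auto
  have FFeq: "FF (Nn n) (an n) (rn n) t =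
      (\<Sum>i<ell n. \<Sum>j\<in>{1..<card (S n i)}. exp (- 2 * t * (p n i * lam n i j)) * (\<Sum>u\<in>S n i. \<mu> n i u * phi n i j u)\<^sup>2)"
    for n t
  proof -
    define g where "g = (\<lambda>(i, j). exp (- 2 * t * (p n i * lam n i j)) * (\<Sum>u\<in>S n i. \<mu> n i u * phi n i j u)\<^sup>2)"
    have "FF (Nn n) (an n) (rn n) t = (\<Sum>k\<in>{1..Nn n}. g (sig n k))"
      unfolding FF_def an_def rn_def g_def psi_def rho_def
      by (intro sum.cong refl) (simp add: case_prod_beta mult.commute)
    also have "\<dots> = sum g {(i, j). i < ell n \<and> 1 \<le> j \<and> j < card (S n i)}"
      by (rule sum.reindex_bij_betw[OF bij])
    also have "{(i, j). i < ell n \<and> 1 \<le> j \<and> j < card (S n i)} = Sigma {..<ell n} (\<lambda>i. {1..<card (S n i)})"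
      by auto
    also have "sum g \<dots> = (\<Sum>i<ell n. \<Sum>j\<in>{1..<card (S n i)}. g (i, j))"
    proof -
      have "(\<Sum>i<ell n. \<Sum>j\<in>{1..<card (S n i)}. g (i, j)) = (\<Sum>(i, j)\<in>Sigma {..<ell n} (\<lambda>i. {1..<card (S n i)}). g (i, j))"
        by (rule sum.Sigma) auto
      thus ?thesis by simp
    qed
    finally show ?thesis unfolding g_def by simp
  qed
  have dnn: "dn n t \<ge> 0" for n t
  proof -
    have "\<forall>y\<in>prod_space (ell n) (S n). prod_measure (ell n) (\<pi> n) y > 0"
      unfolding prod_space_def prod_measure_def
      using chains unfolding finite_irred_chain_def stationary_def
      by (auto intro!: prod_pos simp: PiE_def Pi_def)
    thus ?thesis unfolding dn_def prod_d2_def d2_def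
      by (intro real_sqrt_ge_zero sum_nonneg) (auto intro!: mult_nonneg_nonneg simp: less_imp_le)
  qed
  have dsq: "(dn n t)\<^sup>2 = (\<Prod>i<ell n. 1 + (\<Sum>j\<in>{1..<card (S n i)}. exp (- 2 * t * (p n i * lam n i j)) * (\<Sum>u\<in>S n i. \<mu> n i u * phi n i j u)\<^sup>2)) - 1"
    for n t
    unfolding dn_def by (rule prod_d2_formula) (use chains init eig in auto)
  have xnn: "\<forall>i\<in>{..<ell n}. (\<Sum>j\<in>{1..<card (S n i)}. exp (- 2 * t * (p n i * lam n i j)) * (\<Sum>u\<in>S n i. \<mu> n i u * phi n i j u)\<^sup>2) \<ge> 0"
    for n t by (auto intro!: sum_nonneg)
  interpret cs Nn an rn dn
  proof
    show "good (Nn n) (an n) (rn n)" for n by (rule good)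
    show "dn n t \<ge> 0" for n t by (rule dnn)
    show "FF (Nn n) (an n) (rn n) t \<le> (dn n t)\<^sup>2" for n t
      unfolding dsq FFeq using prod_bounds(1)[OF _ xnn[of n t]] by simp
    show "(dn n t)\<^sup>2 \<le> exp (FF (Nn n) (an n) (rn n) t) - 1" for n t
      unfolding dsq FFeq using prod_bounds(2)[OF _ xnn[of n t]] by simp
  qed
  have e1: "jt_defined (ell n) (S n) (\<mu> n) (phi n) (sig n) c = jdef (Nn n) (an n) c" for n c
    unfolding jt_defined_def jdef_def AA_def Nn_def an_def ..
  have e2: "jt (ell n) (S n) (\<mu> n) (phi n) (sig n) c = jJ (Nn n) (an n) c" for n c
    unfolding jt_def jJ_def AA_def Nn_def an_def ..
  have e3: "taut (ell n) (S n) (p n) (lam n) (\<mu> n) (phi n) (sig n) c = tT (Nn n) (an n) (rn n) c" for n c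
    unfolding taut_def tT_def e2 AA_def Nn_def an_def rn_def by simp
  have e4: "rho (p n) (lam n) (sig n) k = rn n k" for n k unfolding rn_def ..
  have e5: "prod_T2 (ell n) (S n) (p n) (L n) (\<pi> n) (\<mu> n) \<epsilon> = Inf {t. t \<ge> 0 \<and> dn n t \<le> \<epsilon>}" for n \<epsilon>
    unfolding prod_T2_def T2_def dn_def prod_d2_def ..
  have e6: "(\<lambda>n t. prod_d2 (ell n) (S n) (p n) (L n) (\<pi> n) (\<mu> n) t) = dn" unfolding dn_def ..
  have cutH: "has_L2_cutoff dn \<longleftrightarrow> H"
    unfolding has_L2_cutoff_def using cut_to_H H_to_cut zero_less_one by blast
  show ?thesis
    unfolding e1 e2 e3 e4 e5 e6
  proof (intro conjI impI)
    show "has_L2_cutoff dn \<longleftrightarrow> (\<forall>c>0. eventually (\<lambda>n. jdef (Nn n) (an n) c) sequentially \<and>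
        filterlim (\<lambda>n. tT (Nn n) (an n) (rn n) c * rn n (jJ (Nn n) (an n) c)) at_top sequentially)"
      using cutH unfolding H_def .
  next
    assume "has_L2_cutoff dn"
    hence hH: "H" using cutH by simp
    show "\<forall>c>0. L2_cutoff_time dn (\<lambda>n. tT (Nn n) (an n) (rn n) c)" using H_to_cut[OF hH] by blast
  next
    assume "has_L2_cutoff dn"
    hence hH: "H" using cutH by simp
    show "\<forall>\<epsilon>>0. \<forall>c>0. \<exists>C. \<forall>\<^sub>F n in sequentially.
       \<bar>Inf {t. t \<ge> 0 \<and> dn n t \<le> \<epsilon>} - tT (Nn n) (an n) (rn n) c\<bar>
       \<le> C * sqrt (tT (Nn n) (an n) (rn n) c / rn n (jJ (Nn n) (an n) c))"
      using Obound[OF hH] by blast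
  qed
qed


end
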